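(* Let $V$ be a countable set, $\Omega_0$ a finite set, $\Omega=\Omega_0^V$, $q\in\mathbb N$, and let $\gamma=(\gamma_\Lambda)_{\Lambda\Subset V}$ be a quasilocal $q$-specification. Then $\mathcal G_q(\gamma)\neq\varnothing$.
   Context: $\Omega$ carries the product $\sigma$-algebra $\mathcal F$ and the topology of coordinatewise convergence; $\Omega^q$ the product topology. For $\Delta\subset V$, $\mathcal F_\Delta$ is the $\sigma$-algebra generated by coordinates in $\Delta$, $\mathcal F^q_{\Lambda^c}=(\mathcal F_{\Lambda^c})^{\otimes q}$. A probability $q$-kernel is a map $\gamma_\Lambda:\mathcal F\times\Omega^q\to[0,1]$ with $\gamma_\Lambda(\cdot\mid\eta_1,\dots,\eta_q)$ a probability measure and $\gamma_\Lambda(A\mid\cdot)$ $\mathcal F^q_{\Lambda^c}$-measurable; proper means $\gamma_\Lambda(A\mid\eta_1,\dots,\eta_q)=\frac1q\sum_i\mathbf 1_A(\eta_i)$ for $A\in\mathcal F_{\Lambda^c}$. Composition: $(\gamma_\Delta\gamma_\Lambda)(A\mid\eta)=\int_{\Omega^q}\gamma_\Lambda(A\mid\zeta_1,\dots,\zeta_q)\prod_i\gamma_\Delta(d\zeta_i\mid\eta)$. A $q$-specification is a family of proper probability $q$-kernels $(\gamma_\Lambda)_{\Lambda\Subset V}$ with $\gamma_\Delta\gamma_\Lambda=\gamma_\Delta$ for $\Lambda\subset\Delta\Subset V$. It is quasilocal if for each $\Lambda\Subset V$ and every event $A\in\mathcal F_\Lambda$ the map $(\omega_1,\dots,\omega_q)\mapsto\gamma_\Lambda(A\mid\omega_1,\dots,\omega_q)$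 is continuous. For a probability measure $\mu$ on $\Omega$, $\mu^{\otimes q}\gamma_\Lambda(A)=\int_{\Omega^q}\gamma_\Lambda(A\mid\eta_1,\dots,\eta_q)\prod_{i=1}^q\mu(d\eta_i)$. $\mathcal G_q(\gamma)$ is the set of probability measures $\mu$ on $(\Omega,\mathcal F)$ (called $q$-equilibrium measures) with $\mu^{\otimes q}\gamma_\Lambda=\mu$ for all $\Lambda\Subset V$. *)

theory Defs
  imports "HOL-Probability.Probability"
begin

text \<open>Configuration space Omega = Omega0^V with the product sigma-algebra
  (Omega0 = the finite type 'a, V = the countable type 'v).\<close>
definition Omega :: "('v \<Rightarrow> 'a) measure" where
  "Omega = PiM UNIV (\<lambda>_. count_space UNIV)"

definition coord_sigma :: "'v set \<Rightarrow> ('v \<Rightarrow> 'a) measure" where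
  "coord_sigma D = sigma UNIV {{\<omega>. \<omega> x = a} | x a. x \<in> D}"

definition Omega_top :: "('v \<Rightarrow> 'a) topology" where
  "Omega_top = product_topology (\<lambda>_. discrete_topology UNIV) UNIV"

text \<open>Omega^q is modelled as the extensional functions {..<q} -> Omega.\<close>
definition Omega_q :: "nat \<Rightarrow> (nat \<Rightarrow> 'v \<Rightarrow> 'a) measure" where
  "Omega_q q = PiM {..<q} (\<lambda>_. Omega)"

definition proper_prob_qkernel ::
  "nat \<Rightarrow> 'v set \<Rightarrow> ((nat \<Rightarrow> 'v \<Rightarrow> 'a) \<Rightarrow> ('v \<Rightarrow> 'a) measure) \<Rightarrow> bool" where
  "proper_prob_qkernel q L k \<longleftrightarrow>
     (\<forall>\<eta> \<in> space (Omega_q q). prob_space (k \<eta>) \<and> sets (k \<eta>) = sets Omega) \<and>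
     (\<forall>A \<in> sets Omega. (\<lambda>\<eta>. measure (k \<eta>) A)
         \<in> borel_measurable (PiM {..<q} (\<lambda>_. coord_sigma (- L)))) \<and>
     (\<forall>A \<in> sets (coord_sigma (- L)). \<forall>\<eta> \<in> space (Omega_q q).
         measure (k \<eta>) A = (1 / real q) * (\<Sum>i<q. indicator A (\<eta> i)))"

definition kernel_comp ::
  "nat \<Rightarrow> ((nat \<Rightarrow> 'v \<Rightarrow> 'a) \<Rightarrow> ('v \<Rightarrow> 'a) measure) \<Rightarrow> ((nat \<Rightarrow> 'v \<Rightarrow> 'a) \<Rightarrow> ('v \<Rightarrow> 'a) measure)
    \<Rightarrow> (nat \<Rightarrow> 'v \<Rightarrow> 'a) \<Rightarrow> ('v \<Rightarrow> 'a) set \<Rightarrow> ennreal" where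
  "kernel_comp q kD kL \<eta> A = (\<integral>\<^sup>+ \<zeta>. emeasure (kL \<zeta>) A \<partial>(PiM {..<q} (\<lambda>_. kD \<eta>)))"

definition q_specification ::
  "nat \<Rightarrow> ('v set \<Rightarrow> (nat \<Rightarrow> 'v \<Rightarrow> 'a) \<Rightarrow> ('v \<Rightarrow> 'a) measure) \<Rightarrow> bool" where
  "q_specification q \<gamma> \<longleftrightarrow>
     (\<forall>L. finite L \<longrightarrow> proper_prob_qkernel q L (\<gamma> L)) \<and>
     (\<forall>L D. L \<subseteq> D \<and> finite D \<longrightarrow>
        (\<forall>\<eta> \<in> space (Omega_q q). \<forall>A \<in> sets Omega.
           kernel_comp q (\<gamma> D) (\<gamma> L) \<eta> A = emeasure (\<gamma> D \<eta>) A))"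

definition quasilocal ::
  "nat \<Rightarrow> ('v set \<Rightarrow> (nat \<Rightarrow> 'v \<Rightarrow> 'a) \<Rightarrow> ('v \<Rightarrow> 'a) measure) \<Rightarrow> bool" where
  "quasilocal q \<gamma> \<longleftrightarrow>
     (\<forall>L. finite L \<longrightarrow> (\<forall>A \<in> sets (coord_sigma L).
        continuous_map (product_topology (\<lambda>_. Omega_top) {..<q}) euclideanreal
          (\<lambda>\<eta>. measure (\<gamma> L \<eta>) A)))"

definition Gq ::
  "nat \<Rightarrow> ('v set \<Rightarrow> (nat \<Rightarrow> 'v \<Rightarrow> 'a) \<Rightarrow> ('v \<Rightarrow> 'a) measure) \<Rightarrow> ('v \<Rightarrow> 'a) measure set" where
  "Gq q \<gamma> = {\<mu>. prob_space \<mu> \<and> sets \<mu> = sets Omega \<and>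
     (\<forall>L. finite L \<longrightarrow> (\<forall>A \<in> sets Omega.
        (\<integral>\<^sup>+ \<eta>. emeasure (\<gamma> L \<eta>) A \<partial>(PiM {..<q} (\<lambda>_. \<mu>))) = emeasure \<mu> A))}"

end

theory Submission
  imports Defs "HOL-Library.Diagonal_Subsequence"
begin

definition cylF :: "'v set \<Rightarrow> ('v \<Rightarrow> 'a) set \<Rightarrow> ('v \<Rightarrow> 'a) set" where
  "cylF F B = {\<omega>. restrict \<omega> F \<in> B}"

definition cylR :: "('v \<Rightarrow> 'a) set set" where
  "cylR = {cylF F B | F B. finite F}"

lemma cylF_lift:
  assumes "F \<subseteq> G" shows "cylF F B = cylF G {h. restrict h F \<in> B}"
proof -
  have "G \<inter> F = F" using assms by auto
  then show ?thesis by (simp add: cylF_def)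
qed

lemma cylF_in_cylR: "finite F \<Longrightarrow> cylF F B \<in> cylR"
  unfolding cylR_def by auto

lemma cylR_compl: "C \<in> cylR \<Longrightarrow> UNIV - C \<in> cylR"
proof -
  assume "C \<in> cylR"
  then obtain F B where "finite F" "C = cylF F B" unfolding cylR_def by auto
  then have "UNIV - C = cylF F (- B)" unfolding cylF_def by auto
  then show ?thesis using \<open>finite F\<close> cylF_in_cylR by metis
qed

lemma cylR_Un: "C \<in> cylR \<Longrightarrow> D \<in> cylR \<Longrightarrow> C \<union> D \<in> cylR"
proof -
  assume "C \<in> cylR" "D \<in> cylR"
  then obtain F B G B' where fin: "finite F" "finite G" and eq: "C = cylF F B" "D = cylF G B'"
    unfolding cylR_def by auto
  have "C = cylF (F \<union> G) {h. restrict h F \<in> B}" "D = cylF (F \<union> G) {h. restrict h G \<in> B'}"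
    using eq cylF_lift by (metis sup_ge1, metis sup_ge2)
  then have "C \<union> D = cylF (F \<union> G) ({h. restrict h F \<in> B} \<union> {h. restrict h G \<in> B'})"
    unfolding cylF_def by auto
  then show ?thesis using fin cylF_in_cylR by (metis finite_UnI)
qed

lemma cylR_Int: "C \<in> cylR \<Longrightarrow> D \<in> cylR \<Longrightarrow> C \<inter> D \<in> cylR"
proof -
  assume "C \<in> cylR" "D \<in> cylR"
  then have "UNIV - ((UNIV - C) \<union> (UNIV - D)) \<in> cylR" by (intro cylR_compl cylR_Un)
  moreover have "UNIV - ((UNIV - C) \<union> (UNIV - D)) = C \<inter> D" by auto
  ultimately show ?thesis by simp
qed

lemma cylR_Diff: "C \<in> cylR \<Longrightarrow> D \<in> cylR \<Longrightarrow> C - D \<in> cylR"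
proof -
  assume "C \<in> cylR" "D \<in> cylR"
  then have "C \<inter> (UNIV - D) \<in> cylR" by (intro cylR_compl cylR_Int)
  moreover have "C \<inter> (UNIV - D) = C - D" by auto
  ultimately show ?thesis by simp
qed

lemma cylR_empty: "{} \<in> cylR" and cylR_UNIV: "UNIV \<in> cylR"
proof -
  have "{} = cylF {} {}" "UNIV = cylF {} UNIV" unfolding cylF_def by auto
  then show "{} \<in> cylR" "UNIV \<in> cylR" using cylF_in_cylR by (metis finite.emptyI)+
qed

lemma ring_cylR: "ring_of_sets UNIV cylR"
  unfolding ring_of_sets_iff using cylR_empty cylR_Un cylR_Diff by auto

lemma Int_stable_cylR: "Int_stable cylR"
  unfolding Int_stable_def using cylR_Int by auto

lemma countable_cylR: "countable (cylR :: ('v::countable \<Rightarrow> 'a::finite) set set)"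
proof -
  have "cylR \<subseteq> (\<Union>F\<in>{F::'v set. finite F}. (\<lambda>B. cylF F B) ` Pow (PiE F (\<lambda>_. UNIV::'a set)))"
  proof
    fix C :: "('v \<Rightarrow> 'a) set" assume "C \<in> cylR"
    then obtain F B where "finite F" "C = cylF F B" unfolding cylR_def by auto
    moreover have "cylF F B = cylF F (B \<inter> PiE F (\<lambda>_. UNIV))" unfolding cylF_def by auto
    ultimately show "C \<in> (\<Union>F\<in>{F::'v set. finite F}. (\<lambda>B. cylF F B) ` Pow (PiE F (\<lambda>_. UNIV::'a set)))"
      by blast
  qed
  moreover have "countable (\<Union>F\<in>{F::'v set. finite F}. (\<lambda>B. cylF F B) ` Pow (PiE F (\<lambda>_. UNIV::'a set)))"
    by (intro countable_UN countable_Collect_finite countable_finite finite_imageI finite_Pow_iff[THEN iffD2]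
          finite_PiE) auto
  ultimately show ?thesis using countable_subset by blast
qed

lemma cylF_as_union:
  "cylF F B = (\<Union>h\<in>B \<inter> PiE F (\<lambda>_. UNIV). {\<omega>. \<forall>x\<in>F. \<omega> x = h x})"
  unfolding cylF_def
proof (safe, goal_cases)
  case (1 \<omega>) then show ?case by (intro UN_I[of "restrict \<omega> F"]) auto
next
  case (2 \<omega> h)
  then have "restrict \<omega> F = h" by (auto simp: fun_eq_iff PiE_def extensional_def restrict_def)
  then show ?case using 2 by simp
qed

lemma cylF_sets_gen:
  fixes M :: "('v \<Rightarrow> 'a::finite) measure"
  assumes sp: "space M = UNIV" and gen: "\<And>x a. x \<in> F \<Longrightarrow> {\<omega>. \<omega> x = a} \<in> sets M" and fin: "finite F"
  shows "cylF F B \<in> sets M"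
proof -
  have basic: "{\<omega>. \<forall>x\<in>F. \<omega> x = h x} \<in> sets M" for h
  proof (cases "F = {}")
    case True then show ?thesis using sets.top[of M] sp by simp
  next
    case False
    have "{\<omega>. \<forall>x\<in>F. \<omega> x = h x} = (\<Inter>x\<in>F. {\<omega>. \<omega> x = h x})" by auto
    then show ?thesis using False fin gen by (auto intro!: sets.finite_INT)
  qed
  have "finite (B \<inter> PiE F (\<lambda>_. UNIV::'a set))" using fin by (intro finite_Int disjI2 finite_PiE) auto
  then show ?thesis unfolding cylF_as_union using basic by (intro sets.finite_UN) auto
qed

lemma space_Omega: "space Omega = UNIV"
  unfolding Omega_def by (simp add: space_PiM PiE_UNIV_domain)

lemma Omega_gen: "{\<omega>::'v \<Rightarrow> 'a. \<omega> x = a} \<in> sets Omega"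
proof -
  have "(\<lambda>\<omega>::'v\<Rightarrow>'a. \<omega> x) \<in> measurable Omega (count_space UNIV)"
    unfolding Omega_def by (rule measurable_component_singleton) auto
  then have "(\<lambda>\<omega>::'v\<Rightarrow>'a. \<omega> x) -` {a} \<inter> space Omega \<in> sets Omega"
    by (rule measurable_sets) auto
  then show ?thesis by (simp add: space_Omega vimage_def)
qed

lemma cylR_sets: "finite F \<Longrightarrow> cylF F B \<in> sets (Omega :: ('v \<Rightarrow> 'a::finite) measure)"
  by (rule cylF_sets_gen) (auto simp: space_Omega Omega_gen)

lemma cylR_subset: "cylR \<subseteq> sets (Omega :: ('v \<Rightarrow> 'a::finite) measure)"
  unfolding cylR_def using cylR_sets by auto

lemma sets_coord_sigma: "sets (coord_sigma D) = sigma_sets UNIV {{\<omega>. \<omega> x = a} | x a. x \<in> D}"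
  unfolding coord_sigma_def by (rule sets_measure_of) auto

lemma space_coord_sigma: "space (coord_sigma D) = UNIV"
  unfolding coord_sigma_def by (rule space_measure_of) auto

lemma cylF_coord: "finite F \<Longrightarrow> cylF F B \<in> sets (coord_sigma F :: ('v \<Rightarrow> 'a::finite) measure)"
  by (rule cylF_sets_gen) (auto simp: space_coord_sigma sets_coord_sigma)

lemma sets_Omega_cylR: "sets (Omega :: ('v \<Rightarrow> 'a::finite) measure) = sigma_sets UNIV cylR"
proof
  show "sets (Omega :: ('v \<Rightarrow> 'a::finite) measure) \<subseteq> sigma_sets UNIV cylR"
  proof -
    have "sets (Omega :: ('v \<Rightarrow> 'a::finite) measure) = sigma_sets UNIV
       {{f \<in> \<Pi>\<^sub>E i\<in>UNIV. space (count_space UNIV). f i \<in> A} |i A. i \<in> (UNIV::'v set) \<and> A \<in> sets (count_space (UNIV::'a set))}"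
      unfolding Omega_def sets_PiM_single by (simp add: PiE_UNIV_domain)
    also have "\<dots> \<subseteq> sigma_sets UNIV cylR"
    proof (rule sigma_sets_mono, safe)
      fix i :: 'v and A :: "'a set"
      have "{f \<in> \<Pi>\<^sub>E i\<in>UNIV. space (count_space UNIV). f i \<in> A} = cylF {i} {h. h i \<in> A}"
        unfolding cylF_def by (auto simp: PiE_UNIV_domain)
      then show "{f \<in> \<Pi>\<^sub>E i\<in>UNIV. space (count_space UNIV). f i \<in> A} \<in> sigma_sets UNIV cylR"
        by (simp only:, intro sigma_sets.Basic cylF_in_cylR) simp
    qed
    finally show ?thesis .
  qed
next
  show "sigma_sets UNIV cylR \<subseteq> sets (Omega :: ('v \<Rightarrow> 'a::finite) measure)"
  proof -
    have "UNIV \<in> sets (Omega :: ('v \<Rightarrow> 'a::finite) measure)" using sets.top[of Omega] space_Omega by metis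
    then show ?thesis using cylR_subset by (intro sets.sigma_sets_subset') auto
  qed
qed

lemma topspace_Omega_top[simp]: "topspace (Omega_top :: ('v \<Rightarrow> 'a) topology) = UNIV"
  unfolding Omega_top_def by (simp add: PiE_UNIV_domain)

lemma compact_Omega_top: "compact_space (Omega_top :: ('v \<Rightarrow> 'a::finite) topology)"
  unfolding Omega_top_def by (simp add: compact_space_product_topology compact_space_discrete_topology)

lemma open_cylF: assumes "finite F" shows "openin Omega_top (cylF F B)"
proof -
  have pt: "{\<omega>. \<forall>x\<in>F. \<omega> x = h x} = PiE UNIV (\<lambda>x. if x\<in>F then {h x} else UNIV)" for h :: "'a \<Rightarrow> 'b"
  proof (intro set_eqI iffI)
    fix \<omega> assume "\<omega> \<in> PiE UNIV (\<lambda>x. if x\<in>F then {h x} else UNIV)"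
    then have *: "\<omega> x \<in> (if x\<in>F then {h x} else UNIV)" for x by (rule PiE_mem) simp
    show "\<omega> \<in> {\<omega>. \<forall>x\<in>F. \<omega> x = h x}"
    proof (clarify)
      fix x assume "x \<in> F" then show "\<omega> x = h x" using *[of x] by simp
    qed
  qed (auto simp: PiE_UNIV_domain)
  have eq: "cylF F B = \<Union>((\<lambda>h. PiE UNIV (\<lambda>x. if x\<in>F then {h x} else UNIV)) ` (B \<inter> PiE F (\<lambda>_. UNIV)))"
    unfolding cylF_as_union pt ..
  moreover have "openin Omega_top (PiE UNIV (\<lambda>x. if x\<in>F then {h x} else UNIV))" for h
    unfolding Omega_top_def openin_PiE_gen using assms by (auto intro: finite_subset[of _ F])
  then show ?thesis unfolding eq by (intro openin_Union) auto
qed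

lemma closed_cylF: assumes "finite F" shows "closedin Omega_top (cylF F B)"
proof -
  have "topspace Omega_top - cylF F B = cylF F (- B)" unfolding cylF_def by auto
  then show ?thesis unfolding closedin_def using open_cylF[OF assms] by auto
qed

lemma cylR_finite_nonempty:
  fixes A :: "nat \<Rightarrow> ('v \<Rightarrow> 'a::finite) set"
  assumes "range A \<subseteq> cylR" "disjoint_family A" "\<Union>(range A) \<in> cylR"
  shows "\<exists>N. \<forall>i\<ge>N. A i = {}"
proof -
  obtain F B where fin: "finite F" and eq: "\<Union>(range A) = cylF F B" using assms(3) unfolding cylR_def by auto
  have "compactin Omega_top (\<Union>(range A))"
    unfolding eq by (rule closedin_compact_space[OF compact_Omega_top closed_cylF[OF fin]])
  moreover have "\<forall>C\<in>range A. openin Omega_top C"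
  proof
    fix C assume "C \<in> range A"
    then have "C \<in> cylR" using assms(1) by auto
    then obtain F' B' where "finite F'" "C = cylF F' B'" unfolding cylR_def by auto
    then show "openin Omega_top C" using open_cylF by metis
  qed
  ultimately obtain V where V: "finite V" "V \<subseteq> range A" "\<Union>(range A) \<subseteq> \<Union>V"
    unfolding compactin_def by (metis order_refl)
  then obtain K where K: "K \<subseteq> UNIV" "finite K" "V = A ` K" by (metis finite_subset_image)
  then obtain N where N: "K \<subseteq> {..<N}" using finite_nat_bounded by blast
  have "A i = {}" if "i \<ge> N" for i
  proof -
    have "A i \<subseteq> \<Union>(A ` K)" using V K by blast
    moreover have "A i \<inter> A j = {}" if "j \<in> K" for j
    proof -
      have "j < N" using N that by auto
      then have "i \<noteq> j" using \<open>i \<ge> N\<close> by auto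
      then show ?thesis using assms(2) unfolding disjoint_family_on_def by auto
    qed
    ultimately show ?thesis by blast
  qed
  then show ?thesis by blast
qed

definition nb :: "nat \<Rightarrow> (nat \<Rightarrow> 'v \<Rightarrow> 'a) \<Rightarrow> 'v set \<Rightarrow> (nat \<Rightarrow> 'v \<Rightarrow> 'a) set" where
  "nb q \<eta> F = PiE {..<q} (\<lambda>i. PiE UNIV (\<lambda>x. if x\<in>F then {\<eta> i x} else UNIV))"

lemma nb_open: assumes "finite F" shows "openin (product_topology (\<lambda>_. Omega_top) {..<q}) (nb q \<eta> F)"
proof -
  have "openin Omega_top (PiE UNIV (\<lambda>x. if x\<in>F then {\<eta> i x} else UNIV))" for i
    unfolding Omega_top_def openin_PiE_gen using assms by (auto intro: finite_subset[of _ F])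
  then show ?thesis unfolding nb_def by (subst openin_PiE_gen) (auto intro: finite_subset[of _ "{..<q}"])
qed

lemma nb_mem: "\<eta> \<in> topspace (product_topology (\<lambda>_. Omega_top) {..<q}) \<Longrightarrow> \<eta> \<in> nb q \<eta> F"
  unfolding nb_def by (auto simp: PiE_iff)

lemma nb_basis:
  fixes U :: "(nat \<Rightarrow> 'v \<Rightarrow> 'a) set"
  assumes "openin (product_topology (\<lambda>_. Omega_top) {..<q}) U" "\<eta> \<in> U"
  shows "\<exists>F. finite F \<and> nb q \<eta> F \<subseteq> U"
proof -
  have "\<forall>x\<in>U. \<exists>Uo. finite {i \<in> {..<q}. Uo i \<noteq> topspace Omega_top} \<and>
                 (\<forall>i \<in> {..<q}. openin Omega_top (Uo i)) \<and> x \<in> Pi\<^sub>E {..<q} Uo \<and> Pi\<^sub>E {..<q} Uo \<subseteq> U"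
    using assms(1) unfolding openin_product_topology_alt .
  from bspec[OF this assms(2)]
  obtain Uo where Uo: "\<forall>i\<in>{..<q}. openin Omega_top (Uo i)" "\<eta> \<in> PiE {..<q} Uo" "PiE {..<q} Uo \<subseteq> U"
    by (elim exE conjE) (intro that)
  have "\<forall>i\<in>{..<q}. \<exists>W. finite {x. W x \<noteq> UNIV} \<and> \<eta> i \<in> PiE UNIV W \<and> PiE UNIV W \<subseteq> Uo i"
  proof
    fix i assume i: "i \<in> {..<q}"
    then have "openin (product_topology (\<lambda>_. discrete_topology UNIV) UNIV) (Uo i)" "\<eta> i \<in> Uo i"
      using Uo unfolding Omega_top_def by (auto simp: PiE_iff)
    then have "\<forall>x\<in>Uo i. \<exists>W. finite {j \<in> UNIV. W j \<noteq> topspace (discrete_topology UNIV)} \<and>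
                 (\<forall>j \<in> UNIV. openin (discrete_topology UNIV) (W j)) \<and> x \<in> Pi\<^sub>E UNIV W \<and> Pi\<^sub>E UNIV W \<subseteq> Uo i"
      "\<eta> i \<in> Uo i" unfolding openin_product_topology_alt by blast+
    from bspec[OF this]
    show "\<exists>W. finite {x. W x \<noteq> UNIV} \<and> \<eta> i \<in> PiE UNIV W \<and> PiE UNIV W \<subseteq> Uo i"
      by simp
  qed
  from bchoice[OF this] obtain W where W: "\<And>i. i \<in> {..<q} \<Longrightarrow> finite {x. W i x \<noteq> UNIV} \<and> \<eta> i \<in> PiE UNIV (W i) \<and> PiE UNIV (W i) \<subseteq> Uo i"
    by blast
  define F where "F = (\<Union>i\<in>{..<q}. {x. W i x \<noteq> UNIV})"
  have "finite {x. W i x \<noteq> UNIV}" if "i \<in> {..<q}" for i using W[OF that] by blast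
  then have "finite F" unfolding F_def by (intro finite_UN_I) auto
  moreover have "nb q \<eta> F \<subseteq> PiE {..<q} Uo"
  proof
    fix \<eta>' assume h: "\<eta>' \<in> nb q \<eta> F"
    have "\<eta>' i \<in> Uo i" if i: "i \<in> {..<q}" for i
    proof -
      have "\<eta>' i x \<in> W i x" for x
      proof (cases "x \<in> F")
        case True
        have "\<eta>' i \<in> PiE UNIV (\<lambda>x. if x\<in>F then {\<eta> i x} else UNIV)"
          using h i unfolding nb_def by (rule PiE_mem)
        then have "\<eta>' i x \<in> (if x\<in>F then {\<eta> i x} else UNIV)" by (rule PiE_mem) simp
        then have "\<eta>' i x = \<eta> i x" using True by simp
        moreover have "\<eta> i \<in> PiE UNIV (W i)" using W[OF i] by blast
        then have "\<eta> i x \<in> W i x" by (rule PiE_mem) simp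
        ultimately show ?thesis by simp
      next
        case False
        then have "W i x = UNIV" unfolding F_def using i by auto
        then show ?thesis by simp
      qed
      then have "\<eta>' i \<in> PiE UNIV (W i)" by (intro PiE_I) auto
      moreover have "PiE UNIV (W i) \<subseteq> Uo i" using W[OF i] by blast
      ultimately show ?thesis by (rule subsetD[rotated])
    qed
    moreover have "\<eta>' \<in> extensional {..<q}" using h unfolding nb_def PiE_def by blast
    ultimately show "\<eta>' \<in> PiE {..<q} Uo" by (intro PiE_I) (auto simp: extensional_def)
  qed
  ultimately have "finite F \<and> nb q \<eta> F \<subseteq> U" using Uo(3) by (meson order_trans)
  then show ?thesis by blast
qed

lemma unif_approx:
  fixes g :: "(nat \<Rightarrow> 'v \<Rightarrow> 'a::finite) \<Rightarrow> real"
  assumes cont: "continuous_map (product_topology (\<lambda>_. Omega_top) {..<q}) euclideanreal g" and e: "e > 0"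
  shows "\<exists>F. finite F \<and> (\<forall>\<eta>\<in>topspace (product_topology (\<lambda>_. Omega_top) {..<q}).
            \<forall>\<eta>'\<in>topspace (product_topology (\<lambda>_. Omega_top) {..<q}).
            (\<forall>i<q. \<forall>x\<in>F. \<eta> i x = \<eta>' i x) \<longrightarrow> \<bar>g \<eta> - g \<eta>'\<bar> < e)"
proof -
  let ?T = "product_topology (\<lambda>_. Omega_top :: ('v \<Rightarrow> 'a) topology) {..<q}"
  define U where "U \<eta> = {\<eta>' \<in> topspace ?T. g \<eta>' \<in> ball (g \<eta>) (e/2)}" for \<eta>
  have "openin ?T (U \<eta>)" for \<eta>
    unfolding U_def by (rule openin_continuous_map_preimage[OF cont]) auto
  moreover have "\<eta> \<in> topspace ?T \<Longrightarrow> \<eta> \<in> U \<eta>" for \<eta> unfolding U_def using e by auto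
  ultimately have "\<forall>\<eta>\<in>topspace ?T. \<exists>F. finite F \<and> nb q \<eta> F \<subseteq> U \<eta>"
    using nb_basis by metis
  then obtain Fs where Fs: "\<And>\<eta>. \<eta> \<in> topspace ?T \<Longrightarrow> finite (Fs \<eta>) \<and> nb q \<eta> (Fs \<eta>) \<subseteq> U \<eta>"
    by metis
  have "compact_space ?T"
    by (simp add: compact_space_product_topology compact_Omega_top)
  then have "compactin ?T (topspace ?T)" unfolding compact_space_def .
  moreover have "\<forall>C\<in>(\<lambda>\<eta>. nb q \<eta> (Fs \<eta>)) ` topspace ?T. openin ?T C" using Fs nb_open by blast
  moreover have "topspace ?T \<subseteq> \<Union>((\<lambda>\<eta>. nb q \<eta> (Fs \<eta>)) ` topspace ?T)" using nb_mem by blast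
  ultimately have "\<exists>V. finite V \<and> V \<subseteq> (\<lambda>\<eta>. nb q \<eta> (Fs \<eta>)) ` topspace ?T \<and> topspace ?T \<subseteq> \<Union>V"
    unfolding compactin_def by (elim conjE allE[where x="(\<lambda>\<eta>. nb q \<eta> (Fs \<eta>)) ` topspace ?T"]) (simp only:)
  then obtain V where V: "finite V" "V \<subseteq> (\<lambda>\<eta>. nb q \<eta> (Fs \<eta>)) ` topspace ?T" "topspace ?T \<subseteq> \<Union>V"
    by blast
  then obtain K where K: "K \<subseteq> topspace ?T" "finite K" "V = (\<lambda>\<eta>. nb q \<eta> (Fs \<eta>)) ` K"
    using finite_subset_image[OF V(1) V(2)] by blast
  define F where "F = (\<Union>k\<in>K. Fs k)"
  have fF: "finite F" unfolding F_def using K Fs by auto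
  have main: "\<bar>g \<eta> - g \<eta>'\<bar> < e"
    if h: "\<eta> \<in> topspace ?T" "\<eta>' \<in> topspace ?T" "\<forall>i<q. \<forall>x\<in>F. \<eta> i x = \<eta>' i x" for \<eta> \<eta>'
  proof -
    obtain k where k: "k \<in> K" "\<eta> \<in> nb q k (Fs k)" using V K h(1) by blast
    have e1: "\<eta>' \<in> nb q k (Fs k)"
    proof -
      have "Fs k \<subseteq> F" unfolding F_def using k by auto
      note FF = this
      show ?thesis unfolding nb_def
      proof (rule PiE_I)
        fix i assume i: "i \<in> {..<q}"
        show "\<eta>' i \<in> PiE UNIV (\<lambda>x. if x\<in>Fs k then {k i x} else UNIV)"
        proof (rule PiE_I)
          fix x show "\<eta>' i x \<in> (if x \<in> Fs k then {k i x} else UNIV)"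
          proof (cases "x \<in> Fs k")
            case True
            have "\<eta> i \<in> PiE UNIV (\<lambda>x. if x\<in>Fs k then {k i x} else UNIV)"
              using k(2) i unfolding nb_def by (rule PiE_mem)
            then have "\<eta> i x \<in> (if x\<in>Fs k then {k i x} else UNIV)" by (rule PiE_mem) simp
            then have "\<eta> i x = k i x" using True by simp
            moreover have "\<eta> i x = \<eta>' i x" using h(3) i True FF by auto
            ultimately show ?thesis using True by simp
          qed simp
        qed simp
      next
        fix i assume "i \<notin> {..<q}" then show "\<eta>' i = undefined" using h(2) by (auto simp: PiE_iff extensional_def)
      qed
    qed
    have "k \<in> topspace ?T" using K(1) k(1) by (rule subsetD)
    then have sub: "nb q k (Fs k) \<subseteq> U k" using Fs by blast
    have "\<eta> \<in> U k" using sub k(2) by (rule subsetD)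
    moreover have "\<eta>' \<in> U k" using sub e1 by (rule subsetD)
    ultimately have "g \<eta> \<in> ball (g k) (e/2)" "g \<eta>' \<in> ball (g k) (e/2)"
      unfolding U_def by blast+
    then have "\<bar>g \<eta> - g k\<bar> < e/2" "\<bar>g \<eta>' - g k\<bar> < e/2"
      by (simp_all add: dist_real_def abs_minus_commute)
    then show ?thesis by linarith
  qed
  show ?thesis
  proof (intro exI[of _ F] conjI ballI impI)
    show "finite F" by (rule fF)
  next
    fix \<eta> \<eta>' assume "\<eta> \<in> topspace ?T" "\<eta>' \<in> topspace ?T" "\<forall>i<q. \<forall>x\<in>F. \<eta> i x = \<eta>' i x"
    then show "\<bar>g \<eta> - g \<eta>'\<bar> < e" by (rule main)
  qed
qed

lemma space_PiM_Om:
  fixes q :: nat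
  assumes "sets m = sets (Omega :: ('v \<Rightarrow> 'a) measure)"
  shows "space (PiM {..<q} (\<lambda>_. m)) = PiE {..<q} (\<lambda>_. UNIV)"
proof -
  have "space m = UNIV" using sets_eq_imp_space_eq[OF assms] space_Omega by simp
  then show ?thesis by (simp add: space_PiM)
qed

lemma topspace_T: "topspace (product_topology (\<lambda>_. Omega_top :: ('v \<Rightarrow> 'a) topology) {..<(q::nat)}) = PiE {..<q} (\<lambda>_. UNIV)"
  by simp

definition tr :: "nat \<Rightarrow> 'v set \<Rightarrow> (nat \<Rightarrow> 'v \<Rightarrow> 'a) \<Rightarrow> (nat \<Rightarrow> 'v \<Rightarrow> 'a)" where
  "tr q F \<eta> = (\<lambda>i\<in>{..<q}. restrict (\<eta> i) F)"

lemma finite_prod_prob: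
  fixes q :: nat
  assumes "prob_space m" shows "finite_product_prob_space (\<lambda>_. m) {..<q}"
  unfolding finite_product_prob_space_def finite_product_sigma_finite_def product_prob_space_def
    product_prob_space_axioms_def product_sigma_finite_def finite_product_sigma_finite_axioms_def
  using assms prob_space_imp_sigma_finite by auto

lemma int_trunc:
  fixes h :: "(nat \<Rightarrow> 'v \<Rightarrow> 'a::finite) \<Rightarrow> real"
  assumes pm: "prob_space m" and sm: "sets m = sets Omega" and fin: "finite F"
  shows "integrable (PiM {..<q} (\<lambda>_. m)) (\<lambda>\<eta>. h (tr q F \<eta>))"
    "(\<integral>\<eta>. h (tr q F \<eta>) \<partial>PiM {..<q} (\<lambda>_. m)) =
       (\<Sum>t\<in>PiE {..<q} (\<lambda>_. PiE F (\<lambda>_. UNIV)). h t * (\<Prod>i<q. measure m (cylF F {t i})))"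
proof -
  let ?P = "PiM {..<q} (\<lambda>_. m)"
  let ?S = "PiE {..<q} (\<lambda>_. PiE F (\<lambda>_. UNIV::'a set))"
  define E where "E t = PiE {..<q} (\<lambda>i. cylF F {t i})" for t :: "nat \<Rightarrow> 'v \<Rightarrow> 'a"
  have finS: "finite ?S" using fin by (intro finite_PiE) auto
  interpret FP: finite_product_prob_space "\<lambda>_. m" "{..<q}" by (rule finite_prod_prob[OF pm])
  have pP: "prob_space ?P" by (rule prob_space_PiM) (rule pm)
  then have fmP: "finite_measure ?P" by (simp add: prob_space_def)
  have Esets: "E t \<in> sets ?P" for t
    unfolding E_def by (rule sets_PiM_I_finite) (auto simp: sm intro: cylR_sets fin)
  have Emeas: "measure ?P (E t) = (\<Prod>i<q. measure m (cylF F {t i}))" for t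
    unfolding E_def by (subst FP.finite_measure_PiM_emb) (auto simp: sm intro: cylR_sets fin)
  have trS: "tr q F \<eta> \<in> ?S" for \<eta> unfolding tr_def by auto
  have ind: "indicator (E t) \<eta> = (if t = tr q F \<eta> then 1 else (0::real))"
    if "\<eta> \<in> space ?P" "t \<in> ?S" for \<eta> t
  proof -
    have ext: "\<eta> \<in> extensional {..<q}" "t \<in> extensional {..<q}" using that space_PiM_Om[OF sm]
      by (auto simp: PiE_def)
    have "\<eta> \<in> E t \<longleftrightarrow> (\<forall>i<q. restrict (\<eta> i) F = t i)"
      unfolding E_def cylF_def using ext(1) by (auto simp: PiE_def Pi_def)
    also have "\<dots> \<longleftrightarrow> t = tr q F \<eta>"
      unfolding tr_def using ext(2) by (auto simp: fun_eq_iff extensional_def)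
    finally show ?thesis by (simp add: indicator_def)
  qed
  have eq: "h (tr q F \<eta>) = (\<Sum>t\<in>?S. h t * indicator (E t) \<eta>)" if "\<eta> \<in> space ?P" for \<eta>
  proof -
    have "(\<Sum>t\<in>?S. h t * indicator (E t) \<eta>) = (\<Sum>t\<in>?S. if t = tr q F \<eta> then h t else 0)"
      using ind[OF that] by (intro sum.cong) auto
    also have "\<dots> = h (tr q F \<eta>)" using finS trS[of \<eta>] by (simp add: sum.delta')
    finally show ?thesis by simp
  qed
  have int_ind: "integrable ?P (\<lambda>\<eta>. h t * indicator (E t) \<eta>)" for t
  proof -
    have "emeasure ?P (E t) < \<top>" using finite_measure.emeasure_finite[OF fmP, of "E t"] by (metis top.not_eq_extremum)
    then show ?thesis using Esets by (intro integrable_mult_right integrable_real_indicator) auto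
  qed
  show "integrable ?P (\<lambda>\<eta>. h (tr q F \<eta>))"
    by (subst Bochner_Integration.integrable_cong[OF refl eq]) (auto intro!: integrable_sum int_ind)
  have "(\<integral>\<eta>. h (tr q F \<eta>) \<partial>?P) = (\<integral>\<eta>. (\<Sum>t\<in>?S. h t * indicator (E t) \<eta>) \<partial>?P)"
    by (rule Bochner_Integration.integral_cong[OF refl eq])
  also have "\<dots> = (\<Sum>t\<in>?S. (\<integral>\<eta>. h t * indicator (E t) \<eta> \<partial>?P))"
    by (rule Bochner_Integration.integral_sum) (rule int_ind)
  also have "\<dots> = (\<Sum>t\<in>?S. h t * measure ?P (E t))"
    using Esets by (intro sum.cong refl) (simp add: Bochner_Integration.integral_mult_right_zero sets.Int_space_eq2)
  also have "\<dots> = (\<Sum>t\<in>?S. h t * (\<Prod>i<q. measure m (cylF F {t i})))"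
    by (simp add: Emeas)
  finally show "(\<integral>\<eta>. h (tr q F \<eta>) \<partial>?P) = (\<Sum>t\<in>?S. h t * (\<Prod>i<q. measure m (cylF F {t i})))" .
qed

lemma space_Omega_q: "space (Omega_q q :: (nat \<Rightarrow> 'v \<Rightarrow> 'a) measure) = PiE {..<q} (\<lambda>_. UNIV)"
  unfolding Omega_q_def by (rule space_PiM_Om) simp

lemma sets_PiM_Om:
  assumes "sets m = sets (Omega :: ('v \<Rightarrow> 'a) measure)"
  shows "sets (PiM {..<q} (\<lambda>_. m)) = sets (Omega_q q :: (nat \<Rightarrow> 'v \<Rightarrow> 'a) measure)"
  unfolding Omega_q_def by (rule sets_PiM_cong) (auto simp: assms)

lemma approx_bound:
  fixes g :: "(nat \<Rightarrow> 'v \<Rightarrow> 'a::finite) \<Rightarrow> real" and q :: nat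
  assumes gm: "g \<in> borel_measurable (Omega_q q)"
    and gb: "\<And>\<eta>. \<eta> \<in> space (Omega_q q) \<Longrightarrow> \<bar>g \<eta>\<bar> \<le> 1"
    and pm: "prob_space m" and sm: "sets m = sets Omega" and fin: "finite F"
    and close: "\<forall>\<eta>\<in>topspace (product_topology (\<lambda>_. Omega_top) {..<q}).
            \<forall>\<eta>'\<in>topspace (product_topology (\<lambda>_. Omega_top) {..<q}).
            (\<forall>i<q. \<forall>x\<in>F. \<eta> i x = \<eta>' i x) \<longrightarrow> \<bar>g \<eta> - g \<eta>'\<bar> < e"
  shows "\<bar>(\<integral>\<eta>. g \<eta> \<partial>PiM {..<q} (\<lambda>_. m)) - (\<integral>\<eta>. g (tr q F \<eta>) \<partial>PiM {..<q} (\<lambda>_. m))\<bar> \<le> e"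
proof -
  let ?P = "PiM {..<q} (\<lambda>_. m)"
  have pP: "prob_space ?P" by (rule prob_space_PiM) (rule pm)
  then have fmP: "finite_measure ?P" by (simp add: prob_space_def)
  have spP: "space ?P = PiE {..<q} (\<lambda>_. UNIV)" by (rule space_PiM_Om[OF sm])
  have gmP: "g \<in> borel_measurable ?P"
    using gm measurable_cong_sets[OF sets_PiM_Om[OF sm] refl] by blast
  have intg: "integrable ?P g"
  proof (rule finite_measure.integrable_const_bound[OF fmP _ gmP])
    show "AE x in ?P. norm (g x) \<le> 1"
    proof (rule AE_I2)
      fix x assume "x \<in> space ?P"
      then have "x \<in> space (Omega_q q)" by (simp add: spP space_Omega_q)
      then show "norm (g x) \<le> 1" using gb by simp
    qed
  qed
  have intt: "integrable ?P (\<lambda>\<eta>. g (tr q F \<eta>))" by (rule int_trunc(1)[OF pm sm fin])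
  have pt: "\<bar>g \<eta> - g (tr q F \<eta>)\<bar> \<le> e" if "\<eta> \<in> space ?P" for \<eta>
  proof -
    have "\<eta> \<in> topspace (product_topology (\<lambda>_. Omega_top) {..<q})" using that spP by simp
    moreover have "tr q F \<eta> \<in> topspace (product_topology (\<lambda>_. Omega_top) {..<q})"
      unfolding tr_def by simp
    moreover have "\<forall>i<q. \<forall>x\<in>F. \<eta> i x = tr q F \<eta> i x" unfolding tr_def by simp
    ultimately have "\<bar>g \<eta> - g (tr q F \<eta>)\<bar> < e" using close by blast
    then show ?thesis by simp
  qed
  have "\<bar>(\<integral>\<eta>. g \<eta> \<partial>?P) - (\<integral>\<eta>. g (tr q F \<eta>) \<partial>?P)\<bar> = \<bar>\<integral>\<eta>. g \<eta> - g (tr q F \<eta>) \<partial>?P\<bar>"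
    by (simp add: Bochner_Integration.integral_diff[OF intg intt])
  also have "\<dots> \<le> (\<integral>\<eta>. \<bar>g \<eta> - g (tr q F \<eta>)\<bar> \<partial>?P)" by (rule integral_abs_bound)
  also have "\<dots> \<le> (\<integral>\<eta>. e \<partial>?P)"
    by (rule integral_mono) (auto intro!: integrable_abs Bochner_Integration.integrable_diff intg intt
          finite_measure.integrable_const[OF fmP] pt)
  also have "\<dots> = e" using prob_space.prob_space[OF pP] by simp
  finally show ?thesis .
qed

lemma weak_conv:
  fixes g :: "(nat \<Rightarrow> 'v::countable \<Rightarrow> 'a::finite) \<Rightarrow> real" and q :: nat
    and \<mu> :: "nat \<Rightarrow> ('v \<Rightarrow> 'a) measure" and \<nu> :: "('v \<Rightarrow> 'a) measure"
  assumes cont: "continuous_map (product_topology (\<lambda>_. Omega_top) {..<q}) euclideanreal g"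
    and gm: "g \<in> borel_measurable (Omega_q q)"
    and gb: "\<And>\<eta>. \<eta> \<in> space (Omega_q q) \<Longrightarrow> \<bar>g \<eta>\<bar> \<le> 1"
    and pmu: "\<And>n. prob_space (\<mu> n)" and smu: "\<And>n. sets (\<mu> n) = sets Omega"
    and pnu: "prob_space \<nu>" and snu: "sets \<nu> = sets Omega"
    and conv: "\<And>C. C \<in> cylR \<Longrightarrow> (\<lambda>n. measure (\<mu> n) C) \<longlonglongrightarrow> measure \<nu> C"
  shows "(\<lambda>n. \<integral>\<eta>. g \<eta> \<partial>PiM {..<q} (\<lambda>_. \<mu> n)) \<longlonglongrightarrow> (\<integral>\<eta>. g \<eta> \<partial>PiM {..<q} (\<lambda>_. \<nu>))"
proof (rule LIMSEQ_I)
  fix r :: real assume r: "0 < r"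
  then have "r/4 > 0" by simp
  from unif_approx[OF cont this] obtain F where fin: "finite F" and close:
    "\<forall>\<eta>\<in>topspace (product_topology (\<lambda>_. Omega_top) {..<q}).
            \<forall>\<eta>'\<in>topspace (product_topology (\<lambda>_. Omega_top) {..<q}).
            (\<forall>i<q. \<forall>x\<in>F. \<eta> i x = \<eta>' i x) \<longrightarrow> \<bar>g \<eta> - g \<eta>'\<bar> < r/4" by blast
  let ?S = "PiE {..<q} (\<lambda>_. PiE F (\<lambda>_. UNIV::'a set))"
  define c where "c m = (\<Sum>t\<in>?S. g t * (\<Prod>i<q. measure m (cylF F {t i})))" for m :: "('v \<Rightarrow> 'a) measure"
  have "(\<lambda>n. c (\<mu> n)) \<longlonglongrightarrow> c \<nu>"
    unfolding c_def
    by (intro tendsto_sum tendsto_mult_left tendsto_prod conv cylF_in_cylR fin)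
  from LIMSEQ_D[OF this \<open>r/4 > 0\<close>] obtain N where N: "\<And>n. n \<ge> N \<Longrightarrow> \<bar>c (\<mu> n) - c \<nu>\<bar> < r/4"
    by auto
  have b: "\<bar>(\<integral>\<eta>. g \<eta> \<partial>PiM {..<q} (\<lambda>_. m)) - c m\<bar> \<le> r/4" if "prob_space m" "sets m = sets Omega" for m
    using approx_bound[OF gm gb that fin close] int_trunc(2)[OF that fin, of q g] unfolding c_def by simp
  show "\<exists>no. \<forall>n\<ge>no. norm ((\<integral>\<eta>. g \<eta> \<partial>PiM {..<q} (\<lambda>_. \<mu> n)) - (\<integral>\<eta>. g \<eta> \<partial>PiM {..<q} (\<lambda>_. \<nu>))) < r"
  proof (intro exI allI impI)
    fix n assume "n \<ge> N"
    show "norm ((\<integral>\<eta>. g \<eta> \<partial>PiM {..<q} (\<lambda>_. \<mu> n)) - (\<integral>\<eta>. g \<eta> \<partial>PiM {..<q} (\<lambda>_. \<nu>))) < r"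
    proof -
      let ?a = "\<integral>\<eta>. g \<eta> \<partial>PiM {..<q} (\<lambda>_. \<mu> n)" and ?b = "\<integral>\<eta>. g \<eta> \<partial>PiM {..<q} (\<lambda>_. \<nu>)"
      have "\<bar>?a - ?b\<bar> \<le> \<bar>?a - c (\<mu> n)\<bar> + \<bar>c (\<mu> n) - c \<nu>\<bar> + \<bar>c \<nu> - ?b\<bar>" by linarith
      also have "\<dots> < r" using N[OF \<open>n \<ge> N\<close>] b[OF pmu smu, of n] b[OF pnu snu] r by linarith
      finally show ?thesis by simp
    qed
  qed
qed

lemma diag_subseq:
  fixes f :: "nat \<Rightarrow> nat \<Rightarrow> real"
  assumes bdd: "\<And>n k. \<bar>f n k\<bar> \<le> M"
  shows "\<exists>d. strict_mono d \<and> (\<forall>k. convergent (\<lambda>n. f (d n) k))"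
proof -
  let ?P = "\<lambda>k. \<lambda>s. convergent (\<lambda>n. f (s n) k)"
  interpret nat: subseqs ?P
  proof (unfold convergent_def, unfold subseqs_def, auto)
    fix k :: nat and s :: "nat \<Rightarrow> nat" assume s: "strict_mono s"
    have "\<And>n. f (s n) k \<in> {-M..M}"
      using bdd by (simp add: abs_le_iff minus_le_iff)
    then have "\<exists>l s'. strict_mono s' \<and> ((\<lambda>n. f (s n) k) \<circ> s') \<longlonglongrightarrow> l"
      using compact_Icc compact_imp_seq_compact seq_compactE by metis
    thus "\<exists>s'. strict_mono (s'::nat\<Rightarrow>nat) \<and> (\<exists>l. (\<lambda>n. f (s (s' n)) k) \<longlonglongrightarrow> l)"
      by (auto simp: comp_def)
  qed
  define d where "d = nat.diagseq"
  have subseq: "strict_mono d"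
    unfolding d_def using nat.subseq_diagseq by auto
  have cnv: "?P k d" for k
  proof -
    have Pn_seqseq: "?P k (nat.seqseq (Suc k))"
      by (rule nat.seqseq_holds)
    have 1: "(\<lambda>n. f ((nat.seqseq (Suc k) \<circ> (\<lambda>n. nat.fold_reduce (Suc k) n
      (Suc k + n))) n) k) = (\<lambda>n. f (nat.seqseq (Suc k) n) k) \<circ>
      (\<lambda>n. nat.fold_reduce (Suc k) n (Suc k + n))"
      by auto
    have 2: "?P k (d \<circ> ((+) (Suc k)))"
      unfolding d_def nat.diagseq_seqseq 1
      by (intro convergent_subseq_convergent Pn_seqseq nat.subseq_diagonal_rest)
    then obtain L where 3: "(\<lambda>na. f (d (na + Suc k)) k) \<longlonglongrightarrow> L"
      by (auto simp: add.commute dest: convergentD)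
    then have "(\<lambda>n. f (d n) k) \<longlonglongrightarrow> L"
      by (rule LIMSEQ_offset)
    then show ?thesis
      by (auto simp: convergent_def)
  qed
  show ?thesis using subseq cnv by blast
qed

lemma Omega_to_coord: "(\<lambda>\<omega>. \<omega>) \<in> measurable (Omega :: ('v \<Rightarrow> 'a) measure) (coord_sigma D)"
  unfolding coord_sigma_def
proof (rule measurable_measure_of)
  fix y :: "('v \<Rightarrow> 'a) set" assume "y \<in> {{\<omega>. \<omega> x = a} | x a. x \<in> D}"
  then show "(\<lambda>\<omega>. \<omega>) -` y \<inter> space Omega \<in> sets Omega" using Omega_gen by (auto simp: space_Omega)
qed (auto simp: space_Omega)

lemma kernel_meas:
  fixes k :: "(nat \<Rightarrow> 'v \<Rightarrow> 'a) \<Rightarrow> ('v \<Rightarrow> 'a) measure"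
  assumes "proper_prob_qkernel q L k" "A \<in> sets Omega"
  shows "(\<lambda>\<eta>. measure (k \<eta>) A) \<in> borel_measurable (Omega_q q)"
proof -
  have m1: "(\<lambda>\<eta>. measure (k \<eta>) A) \<in> borel_measurable (PiM {..<q} (\<lambda>_. coord_sigma (- L)))"
    using assms unfolding proper_prob_qkernel_def by blast
  have m2: "(\<lambda>\<eta> i. \<eta> i) \<in> measurable (Omega_q q) (PiM {..<q} (\<lambda>_. coord_sigma (- L)))"
  proof (rule measurable_PiM_single')
    fix i assume "i \<in> {..<q}"
    then have "(\<lambda>\<eta>. \<eta> i) \<in> measurable (Omega_q q) Omega"
      unfolding Omega_q_def by (rule measurable_component_singleton)
    then show "(\<lambda>\<eta>. \<eta> i) \<in> measurable (Omega_q q) (coord_sigma (- L))"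
      using Omega_to_coord by (rule measurable_compose)
  next
    show "(\<lambda>\<eta> i. \<eta> i) \<in> space (Omega_q q) \<rightarrow> (\<Pi>\<^sub>E i\<in>{..<q}. space (coord_sigma (- L)))"
      by (simp add: space_Omega_q space_coord_sigma)
  qed
  from measurable_compose[OF m2 m1] show ?thesis by simp
qed

lemma kernel_props:
  assumes "proper_prob_qkernel q L k" "\<eta> \<in> space (Omega_q q)"
  shows "prob_space (k \<eta>)" "sets (k \<eta>) = sets Omega"
  using assms unfolding proper_prob_qkernel_def by auto

lemma nn_int_eq:
  fixes k :: "(nat \<Rightarrow> 'v \<Rightarrow> 'a) \<Rightarrow> ('v \<Rightarrow> 'a) measure"
  assumes K: "proper_prob_qkernel q L k" and A: "A \<in> sets Omega"
    and pm: "prob_space m" and sm: "sets m = sets Omega"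
  shows "integrable (PiM {..<q} (\<lambda>_. m)) (\<lambda>\<eta>. measure (k \<eta>) A)"
    "(\<integral>\<^sup>+\<eta>. emeasure (k \<eta>) A \<partial>PiM {..<q} (\<lambda>_. m)) = ennreal (\<integral>\<eta>. measure (k \<eta>) A \<partial>PiM {..<q} (\<lambda>_. m))"
    "0 \<le> (\<integral>\<eta>. measure (k \<eta>) A \<partial>PiM {..<q} (\<lambda>_. m))"
    "(\<lambda>\<eta>. emeasure (k \<eta>) A) \<in> borel_measurable (PiM {..<q} (\<lambda>_. m))"
proof -
  let ?P = "PiM {..<q} (\<lambda>_. m)"
  have pP: "prob_space ?P" by (rule prob_space_PiM) (rule pm)
  then have fmP: "finite_measure ?P" by (simp add: prob_space_def)
  have spP: "space ?P = space (Omega_q q)" by (simp add: space_PiM_Om[OF sm] space_Omega_q)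
  have gm: "(\<lambda>\<eta>. measure (k \<eta>) A) \<in> borel_measurable ?P"
    using kernel_meas[OF K A] measurable_cong_sets[OF sets_PiM_Om[OF sm] refl] by blast
  show int: "integrable ?P (\<lambda>\<eta>. measure (k \<eta>) A)"
  proof (rule finite_measure.integrable_const_bound[OF fmP _ gm])
    show "AE x in ?P. norm (measure (k x) A) \<le> 1"
    proof (rule AE_I2)
      fix x assume "x \<in> space ?P"
      then have "prob_space (k x)" using kernel_props[OF K] spP by auto
      then show "norm (measure (k x) A) \<le> 1" by (simp add: prob_space.prob_le_1)
    qed
  qed
  have eq: "emeasure (k \<eta>) A = ennreal (measure (k \<eta>) A)" if "\<eta> \<in> space ?P" for \<eta>
  proof -
    have "prob_space (k \<eta>)" using kernel_props[OF K] spP that by auto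
    then show ?thesis by (simp add: prob_space_def finite_measure.emeasure_eq_measure)
  qed
  have "(\<integral>\<^sup>+\<eta>. emeasure (k \<eta>) A \<partial>?P) = (\<integral>\<^sup>+\<eta>. ennreal (measure (k \<eta>) A) \<partial>?P)"
    by (rule nn_integral_cong) (rule eq)
  also have "\<dots> = ennreal (\<integral>\<eta>. measure (k \<eta>) A \<partial>?P)"
    by (rule nn_integral_eq_integral[OF int]) auto
  finally show "(\<integral>\<^sup>+\<eta>. emeasure (k \<eta>) A \<partial>?P) = ennreal (\<integral>\<eta>. measure (k \<eta>) A \<partial>?P)" .
  show "0 \<le> (\<integral>\<eta>. measure (k \<eta>) A \<partial>?P)" by (rule Bochner_Integration.integral_nonneg) auto
  have "(\<lambda>\<eta>. ennreal (measure (k \<eta>) A)) \<in> borel_measurable ?P"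
    using gm by (rule measurable_compose[OF _ measurable_ennreal])
  then show "(\<lambda>\<eta>. emeasure (k \<eta>) A) \<in> borel_measurable ?P"
    by (rule measurable_cong[THEN iffD2, rotated]) (rule eq)
qed

lemma coord_sub: "sets (coord_sigma D) \<subseteq> sets (Omega :: ('v \<Rightarrow> 'a) measure)"
proof -
  have "UNIV \<in> sets (Omega :: ('v \<Rightarrow> 'a) measure)" using sets.top[of Omega] space_Omega by metis
  moreover have "{{\<omega>::'v \<Rightarrow> 'a. \<omega> x = a} | x a. x \<in> D} \<subseteq> sets Omega" using Omega_gen by auto
  ultimately show ?thesis unfolding sets_coord_sigma by (intro sets.sigma_sets_subset')
qed

lemma id_Oq_Q: "(\<lambda>\<eta>. \<eta>) \<in> measurable (Omega_q q :: (nat \<Rightarrow> 'v \<Rightarrow> 'a) measure) (PiM {..<q} (\<lambda>_. coord_sigma D))"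
proof -
  have "(\<lambda>\<eta> i. \<eta> i) \<in> measurable (Omega_q q :: (nat \<Rightarrow> 'v \<Rightarrow> 'a) measure) (PiM {..<q} (\<lambda>_. coord_sigma D))"
  proof (rule measurable_PiM_single')
    fix i assume "i \<in> {..<q}"
    then have "(\<lambda>\<eta>. \<eta> i) \<in> measurable (Omega_q q :: (nat \<Rightarrow> 'v \<Rightarrow> 'a) measure) Omega"
      unfolding Omega_q_def by (rule measurable_component_singleton)
    then show "(\<lambda>\<eta>. \<eta> i) \<in> measurable (Omega_q q :: (nat \<Rightarrow> 'v \<Rightarrow> 'a) measure) (coord_sigma D)"
      using Omega_to_coord by (rule measurable_compose)
  next
    show "(\<lambda>\<eta> i. \<eta> i) \<in> space (Omega_q q :: (nat \<Rightarrow> 'v \<Rightarrow> 'a) measure) \<rightarrow> (\<Pi>\<^sub>E i\<in>{..<q}. space (coord_sigma D :: ('v \<Rightarrow> 'a) measure))"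
      by (simp add: space_Omega_q space_coord_sigma)
  qed
  then show ?thesis by simp
qed

lemma sum_ind_card: "(\<Sum>j<(q::nat). indicator S (\<eta> j) :: real) = real (card {j \<in> {..<q}. \<eta> j \<in> S})"
proof -
  have "(\<Sum>j<q. indicator S (\<eta> j) :: real) = (\<Sum>j<q. of_bool (\<eta> j \<in> S))"
    by (simp add: indicator_def)
  also have "\<dots> = real (card ({..<q} \<inter> {j. \<eta> j \<in> S}))" by (rule sum_of_bool_eq) simp_all
  finally show ?thesis by (simp add: Int_def)
qed

lemma avg_identity:
  fixes k :: "(nat \<Rightarrow> 'v \<Rightarrow> 'a) \<Rightarrow> ('v \<Rightarrow> 'a) measure" and q :: nat
    and f :: "(nat \<Rightarrow> 'v \<Rightarrow> 'a) \<Rightarrow> ennreal"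
  assumes q: "q \<ge> 1" and K: "proper_prob_qkernel q L k" and \<eta>: "\<eta> \<in> space (Omega_q q)"
    and f: "f \<in> borel_measurable (PiM {..<q} (\<lambda>_. coord_sigma (- L)))"
  shows "(\<integral>\<^sup>+\<zeta>. f \<zeta> \<partial>PiM {..<q} (\<lambda>_. k \<eta>)) =
    (\<Sum>J\<in>PiE {..<q} (\<lambda>_. {..<q}). f (\<lambda>i\<in>{..<q}. \<eta> (J i))) / of_nat (card (PiE {..<q} (\<lambda>_. {..<q}::nat set)))"
proof -
  let ?Mc = "coord_sigma (- L) :: ('v \<Rightarrow> 'a) measure"
  let ?Q = "PiM {..<q} (\<lambda>_. ?Mc)"
  let ?P = "PiM {..<q} (\<lambda>_. k \<eta>)"
  let ?JS = "PiE {..<q} (\<lambda>_. {..<q}::nat set)"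
  have pk: "prob_space (k \<eta>)" and sk: "sets (k \<eta>) = sets Omega" using kernel_props[OF K \<eta>] by auto
  have idk: "(\<lambda>x. x) \<in> measurable (k \<eta>) ?Mc"
    using Omega_to_coord measurable_cong_sets[OF sk refl] by blast
  define M' where "M' = distr (k \<eta>) ?Mc (\<lambda>x. x)"
  have pM': "prob_space M'" unfolding M'_def by (rule prob_space.prob_space_distr[OF pk idk])
  have sM': "sets M' = sets ?Mc" unfolding M'_def by simp
  have PSF: "product_sigma_finite (\<lambda>_. M')"
    unfolding product_sigma_finite_def using pM' prob_space_imp_sigma_finite by auto
  have PSF2: "product_sigma_finite (\<lambda>_. k \<eta>)"
    unfolding product_sigma_finite_def using pk prob_space_imp_sigma_finite by auto
  have sQ: "sets ?Q = sets (PiM {..<q} (\<lambda>_. M'))" by (rule sets_PiM_cong) (auto simp: sM')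
  have spP: "space ?P = PiE {..<q} (\<lambda>_. UNIV)" by (rule space_PiM_Om[OF sk])
  have idP: "(\<lambda>x. x) \<in> measurable ?P ?Q"
    using id_Oq_Q measurable_cong_sets[OF sets_PiM_Om[OF sk] refl] by blast
  have emM': "emeasure M' B = emeasure (k \<eta>) B" if "B \<in> sets ?Mc" for B
  proof -
    have "B \<in> sets (k \<eta>)" using that coord_sub sk by auto
    then have "B \<inter> space (k \<eta>) = B" using sets.sets_into_space by auto
    then show ?thesis unfolding M'_def using that by (simp add: emeasure_distr[OF idk])
  qed
  have E1: "distr ?P ?Q (\<lambda>x. x) = PiM {..<q} (\<lambda>_. M')"
  proof (rule product_sigma_finite.PiM_eqI[OF PSF])
    show "sets (distr ?P ?Q (\<lambda>x. x)) = sets (PiM {..<q} (\<lambda>_. M'))" using sQ by simp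
  next
    fix B assume B: "\<And>i. i \<in> {..<q} \<Longrightarrow> B i \<in> sets M'"
    then have B': "\<And>i. i \<in> {..<q} \<Longrightarrow> B i \<in> sets ?Mc" using sM' by auto
    then have B'': "\<And>i. i \<in> {..<q} \<Longrightarrow> B i \<in> sets (k \<eta>)" using coord_sub sk by auto
    have inQ: "PiE {..<q} B \<in> sets ?Q" by (rule sets_PiM_I_finite) (auto intro: B')
    have "PiE {..<q} B \<inter> space ?P = PiE {..<q} B" using spP by auto
    then have "emeasure (distr ?P ?Q (\<lambda>x. x)) (PiE {..<q} B) = emeasure ?P (PiE {..<q} B)"
      using emeasure_distr[OF idP inQ] by simp
    also have "\<dots> = (\<Prod>i<q. emeasure (k \<eta>) (B i))"
      by (rule product_sigma_finite.emeasure_PiM[OF PSF2]) (auto intro: B'')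
    also have "\<dots> = (\<Prod>i<q. emeasure M' (B i))"
      by (intro prod.cong refl emM'[symmetric] B') auto
    finally show "emeasure (distr ?P ?Q (\<lambda>x. x)) (PiE {..<q} B) = (\<Prod>i\<in>{..<q}. emeasure M' (B i))" by simp
  qed simp
  have JSne: "?JS \<noteq> {}" by (auto simp: PiE_eq_empty_iff)
  have JSfin: "finite ?JS" by (rule finite_PiE) auto
  define ev where "ev J = (\<lambda>i\<in>{..<q}. \<eta> (J i))" for J :: "nat \<Rightarrow> nat"
  have evm: "ev \<in> measurable (measure_pmf (pmf_of_set ?JS)) ?Q"
    unfolding measurable_pmf_measure1 ev_def by (auto simp: space_PiM space_coord_sigma)
  define R where "R = distr (measure_pmf (pmf_of_set ?JS)) ?Q ev"
  have E2: "R = PiM {..<q} (\<lambda>_. M')"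
  proof (rule product_sigma_finite.PiM_eqI[OF PSF])
    show "sets R = sets (PiM {..<q} (\<lambda>_. M'))" using sQ by (simp add: R_def)
  next
    fix B assume B: "\<And>i. i \<in> {..<q} \<Longrightarrow> B i \<in> sets M'"
    then have B': "\<And>i. i \<in> {..<q} \<Longrightarrow> B i \<in> sets ?Mc" using sM' by auto
    have inQ: "PiE {..<q} B \<in> sets ?Q" by (rule sets_PiM_I_finite) (auto intro: B')
    have set_eq: "?JS \<inter> (ev -` PiE {..<q} B \<inter> UNIV) = PiE {..<q} (\<lambda>i. {j \<in> {..<q}. \<eta> j \<in> B i})"
      unfolding ev_def Int_iff vimage_def restrict_PiE_iff
      by (auto simp only: PiE_iff mem_Collect_eq UNIV_I Int_iff lessThan_iff simp_thms)
    have "emeasure R (PiE {..<q} B) = emeasure (measure_pmf (pmf_of_set ?JS)) (ev -` PiE {..<q} B \<inter> UNIV)"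
      unfolding R_def using emeasure_distr[OF evm inQ] by simp
    also have "\<dots> = ennreal (real (card (PiE {..<q} (\<lambda>i. {j \<in> {..<q}. \<eta> j \<in> B i}))) / real (card ?JS))"
      by (subst emeasure_pmf_of_set[OF JSne JSfin]) (simp only: set_eq)
    also have "\<dots> = ennreal (\<Prod>i<q. real (card {j \<in> {..<q}. \<eta> j \<in> B i}) / real q)"
      by (simp add: card_PiE prod_dividef)
    also have "\<dots> = (\<Prod>i<q. ennreal (real (card {j \<in> {..<q}. \<eta> j \<in> B i}) / real q))"
      by (rule prod_ennreal[symmetric]) auto
    also have "\<dots> = (\<Prod>i<q. emeasure M' (B i))"
    proof (intro prod.cong refl)
      fix i assume i: "i \<in> {..<q}"
      have "emeasure M' (B i) = emeasure (k \<eta>) (B i)" by (rule emM'[OF B'[OF i]])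
      also have "\<dots> = ennreal (measure (k \<eta>) (B i))"
        using pk by (simp add: prob_space_def finite_measure.emeasure_eq_measure)
      also have "measure (k \<eta>) (B i) = (1 / real q) * (\<Sum>j<q. indicator (B i) (\<eta> j))"
        using K B'[OF i] \<eta> unfolding proper_prob_qkernel_def by blast
      finally show "ennreal (real (card {j \<in> {..<q}. \<eta> j \<in> B i}) / real q) = emeasure M' (B i)"
        by (simp add: sum_ind_card)
    qed
    finally show "emeasure R (PiE {..<q} B) = (\<Prod>i\<in>{..<q}. emeasure M' (B i))" by simp
  qed simp
  have "(\<integral>\<^sup>+\<zeta>. f \<zeta> \<partial>?P) = (\<integral>\<^sup>+\<zeta>. f \<zeta> \<partial>distr ?P ?Q (\<lambda>x. x))"
    by (rule nn_integral_distr[OF idP, symmetric]) (simp add: f)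
  also have "\<dots> = (\<integral>\<^sup>+\<zeta>. f \<zeta> \<partial>R)" by (simp add: E1 E2)
  also have "\<dots> = (\<integral>\<^sup>+J. f (ev J) \<partial>measure_pmf (pmf_of_set ?JS))"
    unfolding R_def by (rule nn_integral_distr[OF evm]) (simp add: f)
  also have "\<dots> = (\<Sum>J\<in>?JS. f (ev J)) / of_nat (card ?JS)"
    by (rule nn_integral_pmf_of_set[OF JSne JSfin])
  finally show ?thesis unfolding ev_def .
qed

lemma comb_avg:
  fixes \<phi> :: "nat \<Rightarrow> real" and q :: nat
  assumes j: "j < q"
  shows "(\<Sum>J\<in>PiE {..<q} (\<lambda>_. {..<q}). \<phi> (J j)) / real (card (PiE {..<q} (\<lambda>_. {..<q}::nat set)))
     = (\<Sum>m<q. \<phi> m) / real q"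
proof -
  have q: "q \<ge> 1" using j by simp
  have "(\<Sum>J\<in>PiE {..<q} (\<lambda>_. {..<q}). \<Prod>x<q. (if x = j then \<phi> (J x) else 1))
      = (\<Prod>x<q. \<Sum>y<q. (if x = j then \<phi> y else 1))"
    by (rule prod_sum_PiE[symmetric]) auto
  moreover have "(\<Prod>x<q. (if x = j then \<phi> (J x) else 1)) = \<phi> (J j)" for J
    using j by (simp add: prod.delta)
  moreover have "(\<Prod>x<q. \<Sum>y<q. (if x = j then \<phi> y else 1)) = (\<Prod>x<q. (if x = j then (\<Sum>y<q. \<phi> y) else real q))"
    by (intro prod.cong refl) auto
  moreover have "(\<Prod>x<q. (if x = j then (\<Sum>y<q. \<phi> y) else real q)) = (\<Sum>y<q. \<phi> y) * real q ^ (q - 1)"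
  proof -
    have "(\<Prod>x<q. (if x = j then (\<Sum>y<q. \<phi> y) else real q))
        = (if j = j then (\<Sum>y<q. \<phi> y) else real q) * (\<Prod>x\<in>{..<q} - {j}. (if x = j then (\<Sum>y<q. \<phi> y) else real q))"
      using j by (subst prod.remove[of _ j]) auto
    also have "(\<Prod>x\<in>{..<q} - {j}. (if x = j then (\<Sum>y<q. \<phi> y) else real q)) = (\<Prod>x\<in>{..<q} - {j}. real q)"
      by (intro prod.cong refl) auto
    also have "\<dots> = real q ^ (q - 1)" using j by (simp add: card_Diff_singleton)
    finally show ?thesis by simp
  qed
  moreover have "real (card (PiE {..<q} (\<lambda>_. {..<q}::nat set))) = real q ^ q"
    by (simp add: card_PiE)
  moreover have "real q ^ q = real q * real q ^ (q - 1)" using q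
    by (metis One_nat_def Suc_pred' less_eq_Suc_le power_Suc)
  ultimately show ?thesis using q by (simp add: field_simps)
qed

lemma max_principle:
  fixes c :: "(nat \<Rightarrow> nat) \<Rightarrow> real" and q :: nat
  assumes q: "q \<ge> 1"
    and harm: "\<And>J. J \<in> PiE {..<q} (\<lambda>_. {..<q}) \<Longrightarrow>
        c J = (\<Sum>K\<in>PiE {..<q} (\<lambda>_. {..<q}). c (\<lambda>i\<in>{..<q}. J (K i))) / real (card (PiE {..<q} (\<lambda>_. {..<q}::nat set)))"
    and zero: "\<And>m. m < q \<Longrightarrow> c (\<lambda>i\<in>{..<q}. m) = 0"
    and J: "J \<in> PiE {..<q} (\<lambda>_. {..<q})"
  shows "c J = 0"
proof -
  let ?JS = "PiE {..<q} (\<lambda>_. {..<q}::nat set)"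
  have fin: "finite ?JS" by (rule finite_PiE) auto
  have ne: "?JS \<noteq> {}" by (auto simp: PiE_eq_empty_iff)
  define M where "M = Max ((\<lambda>J. \<bar>c J\<bar>) ` ?JS)"
  have Mge: "\<bar>c J'\<bar> \<le> M" if "J' \<in> ?JS" for J'
    unfolding M_def using fin that by (intro Max_ge) auto
  have "M \<in> (\<lambda>J. \<bar>c J\<bar>) ` ?JS" unfolding M_def using fin ne by (intro Max_in) auto
  then obtain Js where Js: "Js \<in> ?JS" "\<bar>c Js\<bar> = M" by auto
  define K0 where "K0 = (\<lambda>i\<in>{..<q}. (0::nat))"
  have K0: "K0 \<in> ?JS" unfolding K0_def using q by auto
  have comp: "(\<lambda>i\<in>{..<q}. Js (K i)) \<in> ?JS" if "K \<in> ?JS" for K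
    using Js(1) that by (auto simp: PiE_iff)
  have cK0: "c (\<lambda>i\<in>{..<q}. Js (K0 i)) = 0"
  proof -
    have "(\<lambda>i\<in>{..<q}. Js (K0 i)) = (\<lambda>i\<in>{..<q}. Js 0)" unfolding K0_def by auto
    moreover have "Js 0 < q" using Js(1) q by (auto simp: PiE_iff)
    ultimately show ?thesis using zero by simp
  qed
  have n: "real (card ?JS) > 0" using fin ne by (simp add: card_gt_0_iff)
  have h1: "(\<Sum>K\<in>?JS. c (\<lambda>i\<in>{..<q}. Js (K i))) = c Js * real (card ?JS)"
    using harm[OF Js(1)] n by (simp add: field_simps)
  have "M * real (card ?JS) = \<bar>\<Sum>K\<in>?JS. c (\<lambda>i\<in>{..<q}. Js (K i))\<bar>"
    unfolding h1 using Js(2) n by (simp add: abs_mult)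
  also have "\<dots> \<le> (\<Sum>K\<in>?JS. \<bar>c (\<lambda>i\<in>{..<q}. Js (K i))\<bar>)" by (rule sum_abs)
  also have "\<dots> = \<bar>c (\<lambda>i\<in>{..<q}. Js (K0 i))\<bar> + (\<Sum>K\<in>?JS - {K0}. \<bar>c (\<lambda>i\<in>{..<q}. Js (K i))\<bar>)"
    using K0 fin by (subst sum.remove[of _ K0]) auto
  also have "\<dots> \<le> 0 + (\<Sum>K\<in>?JS - {K0}. M)"
    using cK0 comp Mge by (intro add_mono sum_mono) auto
  also have "\<dots> = (real (card ?JS) - 1) * M"
  proof -
    have "card ?JS \<ge> 1" using fin ne by (simp add: Suc_le_eq card_gt_0_iff)
    then show ?thesis using K0 fin by (simp add: card_Diff_singleton of_nat_diff)
  qed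
  finally have "M * real (card ?JS) \<le> (real (card ?JS) - 1) * M" .
  then have "M \<le> 0" by (simp add: algebra_simps)
  then show ?thesis using Mge[OF J] by simp
qed

lemma spec_props:
  assumes "q_specification q \<gamma>"
  shows "\<And>L. finite L \<Longrightarrow> proper_prob_qkernel q L (\<gamma> L)"
    "\<And>L D \<eta> A. L \<subseteq> D \<Longrightarrow> finite D \<Longrightarrow> \<eta> \<in> space (Omega_q q) \<Longrightarrow> A \<in> sets Omega \<Longrightarrow>
        kernel_comp q (\<gamma> D) (\<gamma> L) \<eta> A = emeasure (\<gamma> D \<eta>) A"
  using assms unfolding q_specification_def by blast+

lemma a_harm:
  fixes \<gamma> :: "'v::countable set \<Rightarrow> (nat \<Rightarrow> 'v \<Rightarrow> 'a::finite) \<Rightarrow> ('v \<Rightarrow> 'a) measure" and q :: nat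
  assumes q: "q \<ge> 1" and spec: "q_specification q \<gamma>" and L: "finite L" and A: "A \<in> sets Omega"
    and \<zeta>: "\<zeta> \<in> space (Omega_q q)"
  shows "measure (\<gamma> L \<zeta>) A = (\<Sum>K\<in>PiE {..<q} (\<lambda>_. {..<q}). measure (\<gamma> L (\<lambda>i\<in>{..<q}. \<zeta> (K i))) A)
            / real (card (PiE {..<q} (\<lambda>_. {..<q}::nat set)))"
proof -
  let ?JS = "PiE {..<q} (\<lambda>_. {..<q}::nat set)"
  let ?P = "PiM {..<q} (\<lambda>_. \<gamma> L \<zeta>)"
  have K: "proper_prob_qkernel q L (\<gamma> L)" by (rule spec_props(1)[OF spec L])
  have kc: "kernel_comp q (\<gamma> L) (\<gamma> L) \<zeta> A = emeasure (\<gamma> L \<zeta>) A"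
    by (rule spec_props(2)[OF spec order_refl L \<zeta> A])
  have sk: "sets (\<gamma> L \<zeta>) = sets Omega" and pk: "prob_space (\<gamma> L \<zeta>)" using kernel_props[OF K \<zeta>] by auto
  have spP: "space ?P = space (Omega_q q)" by (simp add: space_PiM_Om[OF sk] space_Omega_q)
  have am: "(\<lambda>\<xi>. measure (\<gamma> L \<xi>) A) \<in> borel_measurable (PiM {..<q} (\<lambda>_. coord_sigma (- L)))"
    using K A unfolding proper_prob_qkernel_def by blast
  have em: "emeasure (\<gamma> L \<xi>) A = ennreal (measure (\<gamma> L \<xi>) A)" if "\<xi> \<in> space (Omega_q q)" for \<xi>
    using kernel_props[OF K that] by (simp add: prob_space_def finite_measure.emeasure_eq_measure)
  have "ennreal (measure (\<gamma> L \<zeta>) A) = (\<integral>\<^sup>+\<xi>. emeasure (\<gamma> L \<xi>) A \<partial>?P)"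
    using kc em[OF \<zeta>] unfolding kernel_comp_def by simp
  also have "\<dots> = (\<integral>\<^sup>+\<xi>. ennreal (measure (\<gamma> L \<xi>) A) \<partial>?P)"
    by (rule nn_integral_cong) (simp add: em spP)
  also have "\<dots> = (\<Sum>K\<in>?JS. ennreal (measure (\<gamma> L (\<lambda>i\<in>{..<q}. \<zeta> (K i))) A)) / of_nat (card ?JS)"
    by (rule avg_identity[OF q K \<zeta>]) (rule measurable_compose[OF am measurable_ennreal])
  also have "\<dots> = ennreal ((\<Sum>K\<in>?JS. measure (\<gamma> L (\<lambda>i\<in>{..<q}. \<zeta> (K i))) A) / real (card ?JS))"
  proof -
    have ne: "?JS \<noteq> {}" by (auto simp: PiE_eq_empty_iff)
    have fin: "finite ?JS" by (rule finite_PiE) auto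
    have "real (card ?JS) > 0" using ne fin by (simp add: card_gt_0_iff)
    then show ?thesis
      by (simp add: sum_ennreal ennreal_of_nat_eq_real_of_nat divide_ennreal sum_nonneg)
  qed
  finally have eq: "ennreal (measure (\<gamma> L \<zeta>) A) = ennreal ((\<Sum>K\<in>?JS. measure (\<gamma> L (\<lambda>i\<in>{..<q}. \<zeta> (K i))) A) / real (card ?JS))" .
  have nn: "0 \<le> (\<Sum>K\<in>?JS. measure (\<gamma> L (\<lambda>i\<in>{..<q}. \<zeta> (K i))) A) / real (card ?JS)"
    by (intro divide_nonneg_nonneg sum_nonneg measure_nonneg) simp
  show ?thesis using eq ennreal_inj[OF measure_nonneg[of "\<gamma> L \<zeta>" A] nn] by blast
qed

lemma represent:
  fixes \<gamma> :: "'v::countable set \<Rightarrow> (nat \<Rightarrow> 'v \<Rightarrow> 'a::finite) \<Rightarrow> ('v \<Rightarrow> 'a) measure" and q :: nat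
  assumes q: "q \<ge> 1" and spec: "q_specification q \<gamma>" and L: "finite L" and A: "A \<in> sets Omega"
    and \<eta>: "\<eta> \<in> space (Omega_q q)"
  shows "measure (\<gamma> L \<eta>) A = (1 / real q) * (\<Sum>j<q. measure (\<gamma> L (\<lambda>i\<in>{..<q}. \<eta> j)) A)"
proof -
  let ?JS = "PiE {..<q} (\<lambda>_. {..<q}::nat set)"
  define a where "a \<zeta> = measure (\<gamma> L \<zeta>) A" for \<zeta>
  define b where "b \<zeta> = (1 / real q) * (\<Sum>j<q. a (\<lambda>i\<in>{..<q}. \<zeta> j))" for \<zeta> :: "nat \<Rightarrow> 'v \<Rightarrow> 'a"
  define ev where "ev \<zeta> J = (\<lambda>i\<in>{..<q}. \<zeta> (J i))" for \<zeta> :: "nat \<Rightarrow> 'v \<Rightarrow> 'a" and J :: "nat \<Rightarrow> nat"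
  have spq: "space (Omega_q q :: (nat \<Rightarrow> 'v \<Rightarrow> 'a) measure) = PiE {..<q} (\<lambda>_. UNIV)" by (rule space_Omega_q)
  have ev_sp: "ev \<zeta> J \<in> space (Omega_q q)" for \<zeta> J unfolding ev_def spq by auto
  have aH: "a \<zeta> = (\<Sum>K\<in>?JS. a (ev \<zeta> K)) / real (card ?JS)" if "\<zeta> \<in> space (Omega_q q)" for \<zeta>
    unfolding a_def ev_def by (rule a_harm[OF q spec L A that])
  have bH: "b \<zeta> = (\<Sum>K\<in>?JS. b (ev \<zeta> K)) / real (card ?JS)" for \<zeta>
  proof -
    define \<phi> where "\<phi> m = a (\<lambda>i\<in>{..<q}. \<zeta> m)" for m
    have "b (ev \<zeta> K) = (1 / real q) * (\<Sum>j<q. \<phi> (K j))" if "K \<in> ?JS" for K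
      unfolding b_def \<phi>_def ev_def by (intro arg_cong2[where f="(*)"] refl sum.cong) auto
    then have "(\<Sum>K\<in>?JS. b (ev \<zeta> K)) / real (card ?JS) = (1 / real q) * (\<Sum>j<q. (\<Sum>K\<in>?JS. \<phi> (K j)) / real (card ?JS))"
      by (simp add: sum_distrib_left sum_divide_distrib sum.swap[of _ ?JS])
    also have "\<dots> = (1 / real q) * (\<Sum>j<q. (\<Sum>m<q. \<phi> m) / real q)"
      by (intro arg_cong2[where f="(*)"] refl sum.cong comb_avg) auto
    also have "\<dots> = b \<zeta>" unfolding b_def \<phi>_def using q by simp
    finally show ?thesis by simp
  qed
  define c where "c J = a (ev \<eta> J) - b (ev \<eta> J)" for J
  have "c (\<lambda>i\<in>{..<q}. i) = 0"
  proof (rule max_principle[OF q, where c=c])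
    fix J assume J: "J \<in> ?JS"
    have comp: "ev (ev \<eta> J) K = ev \<eta> (\<lambda>i\<in>{..<q}. J (K i))" if "K \<in> ?JS" for K
      using that unfolding ev_def by (auto simp: fun_eq_iff PiE_iff)
    have "c J = (\<Sum>K\<in>?JS. a (ev (ev \<eta> J) K)) / real (card ?JS) - (\<Sum>K\<in>?JS. b (ev (ev \<eta> J) K)) / real (card ?JS)"
      unfolding c_def using aH[OF ev_sp] bH by metis
    also have "\<dots> = (\<Sum>K\<in>?JS. c (\<lambda>i\<in>{..<q}. J (K i))) / real (card ?JS)"
      unfolding c_def by (simp add: comp diff_divide_distrib[symmetric] sum_subtractf)
    finally show "c J = (\<Sum>K\<in>?JS. c (\<lambda>i\<in>{..<q}. J (K i))) / real (card ?JS)" .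
  next
    fix m assume m: "m < q"
    have "ev \<eta> (\<lambda>i\<in>{..<q}. m) = (\<lambda>i\<in>{..<q}. \<eta> m)" unfolding ev_def by auto
    moreover have "b (\<lambda>i\<in>{..<q}. \<eta> m) = a (\<lambda>i\<in>{..<q}. \<eta> m)"
    proof -
      have "(\<Sum>j<q. a (\<lambda>i\<in>{..<q}. (\<lambda>i\<in>{..<q}. \<eta> m) j)) = (\<Sum>j<q. a (\<lambda>i\<in>{..<q}. \<eta> m))"
        by (intro sum.cong refl) auto
      then show ?thesis unfolding b_def using q by simp
    qed
    ultimately show "c (\<lambda>i\<in>{..<q}. m) = 0" unfolding c_def by simp
  qed auto
  moreover have "ev \<eta> (\<lambda>i\<in>{..<q}. i) = \<eta>"
    using \<eta> unfolding ev_def spq by (auto simp: fun_eq_iff PiE_iff extensional_def)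
  ultimately have "a \<eta> = b \<eta>" unfolding c_def by simp
  then show ?thesis unfolding a_def b_def by simp
qed

definition diag :: "nat \<Rightarrow> ('v \<Rightarrow> 'a) \<Rightarrow> (nat \<Rightarrow> 'v \<Rightarrow> 'a)" where
  "diag q \<omega> = (\<lambda>i\<in>{..<q}. \<omega>)"

lemma diag_space: "diag q \<omega> \<in> space (Omega_q q)"
  unfolding diag_def space_Omega_q by auto

lemma diag_proper:
  fixes k :: "(nat \<Rightarrow> 'v \<Rightarrow> 'a) \<Rightarrow> ('v \<Rightarrow> 'a) measure" and q :: nat
  assumes q: "q \<ge> 1" and K: "proper_prob_qkernel q L k" and D: "D \<in> sets (coord_sigma (- L))"
    and C: "C \<in> sets Omega"
  shows "measure (k (diag q \<omega>)) (C \<inter> D) = measure (k (diag q \<omega>)) C * indicator D \<omega>"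
proof -
  let ?M = "k (diag q \<omega>)"
  have pM: "prob_space ?M" and sM: "sets ?M = sets Omega" using kernel_props[OF K diag_space] by auto
  have fM: "finite_measure ?M" using pM by (simp add: prob_space_def)
  have spM: "space ?M = UNIV" using sets_eq_imp_space_eq[OF sM] space_Omega by simp
  have Ds: "D \<in> sets ?M" using D coord_sub sM by auto
  have Cs: "C \<in> sets ?M" using C sM by auto
  have "measure ?M D = (1 / real q) * (\<Sum>i<q. indicator D (diag q \<omega> i))"
    using K D diag_space unfolding proper_prob_qkernel_def by blast
  also have "(\<Sum>i<q. indicator D (diag q \<omega> i)) = (\<Sum>i<q. indicator D \<omega> :: real)"
    unfolding diag_def by (intro sum.cong) auto
  finally have mD: "measure ?M D = indicator D \<omega>" using q by simp
  show ?thesis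
  proof (cases "\<omega> \<in> D")
    case True
    then have "measure ?M D = 1" using mD by simp
    then have "measure ?M (space ?M - D) = 0" using prob_space.prob_compl[OF pM Ds] by simp
    moreover have "measure ?M (C - D) \<le> measure ?M (space ?M - D)"
      by (rule finite_measure.finite_measure_mono[OF fM _ sets.compl_sets[OF Ds]]) (auto simp: spM)
    ultimately have "measure ?M (C - D) = 0" using measure_nonneg[of ?M "C - D"] by linarith
    then have "measure ?M C = measure ?M (C \<inter> D)"
      using finite_measure.finite_measure_Diff'[OF fM Cs Ds] by simp
    then show ?thesis using True by simp
  next
    case False
    then have "measure ?M D = 0" using mD by simp
    moreover have "measure ?M (C \<inter> D) \<le> measure ?M D"
      using Ds by (intro finite_measure.finite_measure_mono[OF fM]) auto
    ultimately have "measure ?M (C \<inter> D) = 0" using measure_nonneg[of ?M "C \<inter> D"] by linarith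
    then show ?thesis using False by simp
  qed
qed

lemma ind_cont:
  assumes "finite F"
  shows "continuous_map Omega_top euclideanreal (indicator (cylF F B) :: ('v \<Rightarrow> 'a) \<Rightarrow> real)"
  unfolding continuous_map_def
proof (intro conjI allI impI)
  show "indicator (cylF F B) \<in> topspace Omega_top \<rightarrow> topspace euclideanreal" by simp
next
  fix U :: "real set" assume "openin euclideanreal U"
  have eq: "{x \<in> topspace Omega_top. (indicator (cylF F B) x :: real) \<in> U}
      = (if (1::real) \<in> U then cylF F B else {}) \<union> (if (0::real) \<in> U then cylF F (- B) else {})"
    unfolding cylF_def by (auto simp: indicator_def)
  show "openin Omega_top {x \<in> topspace Omega_top. (indicator (cylF F B) x :: real) \<in> U}"
    unfolding eq using open_cylF[OF assms] by (intro openin_Un) auto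
qed

lemma diag_cont: "continuous_map (Omega_top :: ('v \<Rightarrow> 'a) topology) (product_topology (\<lambda>_. Omega_top) {..<q}) (diag q)"
  unfolding continuous_map_componentwise
proof (intro conjI ballI)
  show "diag q ` topspace Omega_top \<subseteq> extensional {..<q}" unfolding diag_def by auto
next
  fix k assume "k \<in> {..<q}"
  then show "continuous_map Omega_top Omega_top (\<lambda>x. diag q x k)"
    unfolding diag_def by (simp add: continuous_map_id[unfolded id_def])
qed

lemma gprime_cont:
  fixes k :: "(nat \<Rightarrow> 'v \<Rightarrow> 'a) \<Rightarrow> ('v \<Rightarrow> 'a) measure"
  assumes cont: "continuous_map (product_topology (\<lambda>_. Omega_top) {..<q}) euclideanreal (\<lambda>\<eta>. measure (k \<eta>) C)"
    and F: "finite F"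
  shows "continuous_map (product_topology (\<lambda>_. Omega_top) {..<q}) euclideanreal
     (\<lambda>\<eta>. (1 / real q) * (\<Sum>j<q. measure (k (diag q (\<eta> j))) C * indicator (cylF F B) (\<eta> j)))"
proof -
  have phi: "continuous_map Omega_top euclideanreal (\<lambda>\<omega>. measure (k (diag q \<omega>)) C)"
    using continuous_map_compose[OF diag_cont cont] by (simp add: comp_def)
  have "continuous_map (product_topology (\<lambda>_. Omega_top) {..<q}) euclideanreal
          (\<lambda>\<eta>. measure (k (diag q (\<eta> j))) C * indicator (cylF F B) (\<eta> j))" if j: "j \<in> {..<q}" for j
  proof -
    have pj: "continuous_map (product_topology (\<lambda>_. Omega_top :: ('v \<Rightarrow> 'a) topology) {..<q}) Omega_top (\<lambda>\<eta>. \<eta> j)"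
      using continuous_map_product_projection[OF j, of "\<lambda>_. Omega_top :: ('v \<Rightarrow> 'a) topology"] by simp
    show ?thesis
      using continuous_map_compose[OF pj phi] continuous_map_compose[OF pj ind_cont[OF F, of B]]
      by (intro continuous_map_real_mult) (simp_all add: comp_def)
  qed
  then show ?thesis
    by (intro continuous_map_real_mult_left continuous_map_sum) auto
qed

definition GL :: "'v set \<Rightarrow> ('v \<Rightarrow> 'a) set set" where
  "GL L = {cylF F1 B1 \<inter> cylF F2 B2 | F1 B1 F2 B2. finite F1 \<and> F1 \<subseteq> L \<and> finite F2 \<and> F2 \<subseteq> - L}"

lemma cylF_Int: "cylF F B \<inter> cylF G B' = cylF (F \<union> G) {h. restrict h F \<in> B \<and> restrict h G \<in> B'}"
proof -
  have "cylF F B = cylF (F \<union> G) {h. restrict h F \<in> B}" "cylF G B' = cylF (F \<union> G) {h. restrict h G \<in> B'}"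
    using cylF_lift[of F "F \<union> G" B] cylF_lift[of G "F \<union> G" B'] by auto
  then show ?thesis by (auto simp: cylF_def)
qed

lemma GL_Int_stable: "Int_stable (GL L :: ('v \<Rightarrow> 'a) set set)"
  unfolding Int_stable_def
proof (intro ballI)
  fix X Y :: "('v \<Rightarrow> 'a) set" assume "X \<in> GL L" "Y \<in> GL L"
  then obtain F1 B1 F2 B2 F1' B1' F2' B2' where
    X: "X = cylF F1 B1 \<inter> cylF F2 B2" "finite F1" "F1 \<subseteq> L" "finite F2" "F2 \<subseteq> - L" and
    Y: "Y = cylF F1' B1' \<inter> cylF F2' B2'" "finite F1'" "F1' \<subseteq> L" "finite F2'" "F2' \<subseteq> - L"
    unfolding GL_def by blast
  have "X \<inter> Y = (cylF F1 B1 \<inter> cylF F1' B1') \<inter> (cylF F2 B2 \<inter> cylF F2' B2')" using X Y by auto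
  also have "\<dots> = cylF (F1 \<union> F1') {h. restrict h F1 \<in> B1 \<and> restrict h F1' \<in> B1'} \<inter>
                  cylF (F2 \<union> F2') {h. restrict h F2 \<in> B2 \<and> restrict h F2' \<in> B2'}"
    by (simp only: cylF_Int)
  finally show "X \<inter> Y \<in> GL L" unfolding GL_def using X Y by blast
qed

lemma GL_sub: "GL L \<subseteq> cylR"
  unfolding GL_def by (auto intro!: cylR_Int cylF_in_cylR)

lemma cylF_empty_UNIV: "cylF {} UNIV = UNIV"
  unfolding cylF_def by auto

lemma sets_Omega_GL: "sets (Omega :: ('v \<Rightarrow> 'a::finite) measure) = sigma_sets UNIV (GL L)"
proof
  show "sets (Omega :: ('v \<Rightarrow> 'a::finite) measure) \<subseteq> sigma_sets UNIV (GL L)"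
  proof -
    have "sets (Omega :: ('v \<Rightarrow> 'a::finite) measure) = sigma_sets UNIV
       {{f \<in> \<Pi>\<^sub>E i\<in>UNIV. space (count_space UNIV). f i \<in> A} |i A. i \<in> (UNIV::'v set) \<and> A \<in> sets (count_space (UNIV::'a set))}"
      unfolding Omega_def sets_PiM_single by (simp add: PiE_UNIV_domain)
    also have "\<dots> \<subseteq> sigma_sets UNIV (GL L)"
    proof (rule sigma_sets_mono, safe)
      fix i :: 'v and A :: "'a set"
      have eq: "{f \<in> \<Pi>\<^sub>E i\<in>UNIV. space (count_space UNIV). f i \<in> A} = cylF {i} {h. h i \<in> A}"
        unfolding cylF_def by (auto simp: PiE_UNIV_domain)
      have "cylF {i} {h. h i \<in> A} \<in> GL L"
      proof (cases "i \<in> L")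
        case True
        have "cylF {i} {h. h i \<in> A} = cylF {i} {h. h i \<in> A} \<inter> cylF {} UNIV" by (simp add: cylF_empty_UNIV)
        then show ?thesis unfolding GL_def using True by blast
      next
        case False
        have "cylF {i} {h. h i \<in> A} = cylF {} UNIV \<inter> cylF {i} {h. h i \<in> A}" by (simp add: cylF_empty_UNIV)
        then show ?thesis unfolding GL_def using False by blast
      qed
      then show "{f \<in> \<Pi>\<^sub>E i\<in>UNIV. space (count_space UNIV). f i \<in> A} \<in> sigma_sets UNIV (GL L)"
        unfolding eq by (rule sigma_sets.Basic)
    qed
    finally show ?thesis .
  qed
next
  have "UNIV \<in> sets (Omega :: ('v \<Rightarrow> 'a::finite) measure)" using sets.top[of Omega] space_Omega by metis
  then show "sigma_sets UNIV (GL L) \<subseteq> sets (Omega :: ('v \<Rightarrow> 'a::finite) measure)"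
    using GL_sub cylR_subset by (intro sets.sigma_sets_subset') auto
qed

theorem mainTheorem5:
  fixes \<gamma> :: "'v::countable set \<Rightarrow> (nat \<Rightarrow> 'v \<Rightarrow> 'a::finite) \<Rightarrow> ('v \<Rightarrow> 'a) measure"
    and q :: nat
  assumes "q \<ge> 1"
    and "q_specification q \<gamma>"
    and "quasilocal q \<gamma>"
  shows "Gq q \<gamma> \<noteq> {}"
proof -
  note q = assms(1)
  have proper: "\<And>L. finite L \<Longrightarrow> proper_prob_qkernel q L (\<gamma> L)" by (rule spec_props(1)[OF assms(2)])
  note cons = spec_props(2)[OF assms(2)]
  have ql: "\<And>L A. finite L \<Longrightarrow> A \<in> sets (coord_sigma L) \<Longrightarrow>
      continuous_map (product_topology (\<lambda>_. Omega_top) {..<q}) euclideanreal (\<lambda>\<eta>. measure (\<gamma> L \<eta>) A)"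
    using assms(3) unfolding quasilocal_def by blast
  define \<eta>0 :: "nat \<Rightarrow> 'v \<Rightarrow> 'a" where "\<eta>0 = diag q undefined"
  have \<eta>0: "\<eta>0 \<in> space (Omega_q q)" unfolding \<eta>0_def by (rule diag_space)
  define \<Lambda> :: "nat \<Rightarrow> 'v set" where "\<Lambda> n = to_nat -` {..<n}" for n
  have fin\<Lambda>: "finite (\<Lambda> n)" for n unfolding \<Lambda>_def by (rule finite_vimageI) (auto simp: inj_to_nat)
  have \<Lambda>big: "\<exists>n0. \<forall>n\<ge>n0. L \<subseteq> \<Lambda> n" if fL: "finite L" for L
  proof -
    obtain n0 where n0: "to_nat ` L \<subseteq> {..<n0}" using finite_nat_bounded[OF finite_imageI[OF fL]] by blast
    have "L \<subseteq> \<Lambda> n" if "n \<ge> n0" for n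
      using n0 that unfolding \<Lambda>_def by auto
    then show ?thesis by blast
  qed
  define \<mu> where "\<mu> n = \<gamma> (\<Lambda> n) \<eta>0" for n
  have pmu: "prob_space (\<mu> n)" and smu: "sets (\<mu> n) = sets Omega" for n
    using kernel_props[OF proper[OF fin\<Lambda>] \<eta>0] unfolding \<mu>_def by auto
  have spmu: "space (\<mu> n) = UNIV" for n using sets_eq_imp_space_eq[OF smu] space_Omega by simp
  define Cn where "Cn k = from_nat_into (cylR :: ('v \<Rightarrow> 'a) set set) k" for k
  have "\<exists>d. strict_mono d \<and> (\<forall>k. convergent (\<lambda>n. measure (\<mu> (d n)) (Cn k)))"
    by (rule diag_subseq[where M=1]) (simp add: prob_space.prob_le_1[OF pmu])
  then obtain d where d: "strict_mono d" "\<And>k. convergent (\<lambda>n. measure (\<mu> (d n)) (Cn k))" by blast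
  have cvC: "convergent (\<lambda>n. measure (\<mu> (d n)) C)" if "C \<in> cylR" for C
  proof -
    have "Cn (to_nat_on cylR C) = C" unfolding Cn_def by (rule from_nat_into_to_nat_on[OF countable_cylR that])
    then show ?thesis using d(2)[of "to_nat_on cylR C"] by simp
  qed
  define lm where "lm C = lim (\<lambda>n. measure (\<mu> (d n)) C)" for C
  have lmc: "(\<lambda>n. measure (\<mu> (d n)) C) \<longlonglongrightarrow> lm C" if "C \<in> cylR" for C
    unfolding lm_def using cvC[OF that] by (simp add: convergent_LIMSEQ_iff)
  have lm_nn: "0 \<le> lm C" if "C \<in> cylR" for C
    by (rule LIMSEQ_le_const[OF lmc[OF that]]) simp
  define \<nu>0 where "\<nu>0 C = ennreal (lm C)" for C
  have lm_empty: "lm {} = 0"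
  proof -
    have "(\<lambda>n. measure (\<mu> (d n)) {}) = (\<lambda>n. 0)" by simp
    then show ?thesis using lmc[OF cylR_empty] by (simp add: LIMSEQ_const_iff)
  qed
  have lm_UNIV: "lm UNIV = 1"
  proof -
    have "(\<lambda>n. measure (\<mu> (d n)) UNIV) = (\<lambda>n. 1)"
      using prob_space.prob_space[OF pmu] spmu by simp
    then show ?thesis using lmc[OF cylR_UNIV] by (simp add: LIMSEQ_const_iff)
  qed
  have pos: "positive cylR \<nu>0" unfolding positive_def \<nu>0_def using lm_empty by simp
  have add: "additive cylR \<nu>0"
  proof (unfold additive_def, intro ballI impI)
    fix A B :: "('v \<Rightarrow> 'a) set" assume A: "A \<in> cylR" and B: "B \<in> cylR" and AB: "A \<inter> B = {}"
    have AB': "A \<union> B \<in> cylR" by (rule cylR_Un[OF A B])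
    have "measure (\<mu> (d n)) (A \<union> B) = measure (\<mu> (d n)) A + measure (\<mu> (d n)) B" for n
      using pmu smu cylR_subset A B AB
      by (intro finite_measure.finite_measure_Union) (auto simp: prob_space_def)
    then have "(\<lambda>n. measure (\<mu> (d n)) (A \<union> B)) \<longlonglongrightarrow> lm A + lm B"
      using tendsto_add[OF lmc[OF A] lmc[OF B]] by simp
    then have "lm (A \<union> B) = lm A + lm B" using LIMSEQ_unique[OF lmc[OF AB']] by blast
    then show "\<nu>0 (A \<union> B) = \<nu>0 A + \<nu>0 B" unfolding \<nu>0_def using lm_nn A B by (simp add: ennreal_plus)
  qed
  have ca: "countably_additive cylR \<nu>0"
  proof (unfold countably_additive_def, intro allI impI)
    fix A :: "nat \<Rightarrow> ('v \<Rightarrow> 'a) set" assume A: "range A \<subseteq> cylR" "disjoint_family A" "\<Union>(range A) \<in> cylR"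
    obtain N where N: "\<forall>i\<ge>N. A i = {}" using cylR_finite_nonempty[OF A] by blast
    have "(\<Sum>i. \<nu>0 (A i)) = (\<Sum>i<N. \<nu>0 (A i))"
      by (rule suminf_finite) (use N pos in \<open>auto simp: positive_def\<close>)
    also have "\<dots> = \<nu>0 (\<Union>i\<in>{..<N}. A i)"
      by (rule ring_of_sets.additive_sum[OF ring_cylR pos add]) (use A in \<open>auto simp: disjoint_family_on_def\<close>)
    also have "(\<Union>i\<in>{..<N}. A i) = \<Union>(range A)"
    proof
      show "\<Union>(range A) \<subseteq> (\<Union>i\<in>{..<N}. A i)"
      proof
        fix x assume "x \<in> \<Union>(range A)"
        then obtain i where i: "x \<in> A i" by auto
        then have "i < N" using N by (metis empty_iff not_le)
        then show "x \<in> (\<Union>i\<in>{..<N}. A i)" using i by auto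
      qed
    qed auto
    finally show "(\<Sum>i. \<nu>0 (A i)) = \<nu>0 (\<Union>(range A))" .
  qed
  obtain \<mu>' where \<mu>': "\<forall>s\<in>cylR. \<mu>' s = \<nu>0 s" "measure_space UNIV (sigma_sets UNIV cylR) \<mu>'"
    using ring_of_sets.caratheodory'[OF ring_cylR pos ca] by blast
  define \<nu> where "\<nu> = measure_of UNIV (sigma_sets UNIV cylR) \<mu>'"
  have sa: "sigma_algebra UNIV (sigma_sets UNIV (cylR :: ('v \<Rightarrow> 'a) set set))"
    using \<mu>'(2) by (simp add: measure_space_def)
  have snu: "sets \<nu> = sets Omega" unfolding \<nu>_def sets_Omega_cylR by (rule sigma_algebra.sets_measure_of_eq[OF sa])
  have spnu: "space \<nu> = UNIV" using sets_eq_imp_space_eq[OF snu] space_Omega by simp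
  have emnu: "emeasure \<nu> C = \<nu>0 C" if "C \<in> cylR" for C
  proof -
    have "emeasure \<nu> C = \<mu>' C" unfolding \<nu>_def using \<mu>'(2) that
      by (intro emeasure_measure_of_sigma[OF sa]) (auto simp: measure_space_def)
    then show ?thesis using \<mu>'(1) that by simp
  qed
  have pnu: "prob_space \<nu>"
    by (rule prob_spaceI) (simp add: spnu emnu[OF cylR_UNIV] \<nu>0_def lm_UNIV)
  have conv: "(\<lambda>n. measure (\<mu> (d n)) C) \<longlonglongrightarrow> measure \<nu> C" if "C \<in> cylR" for C
  proof -
    have "measure \<nu> C = lm C" using emnu[OF that] lm_nn[OF that] unfolding measure_def \<nu>0_def by simp
    then show ?thesis using lmc[OF that] by simp
  qed
  have "\<nu> \<in> Gq q \<gamma>"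
    unfolding Gq_def
  proof (intro CollectI conjI allI impI ballI)
    show "prob_space \<nu>" by (rule pnu)
    show "sets \<nu> = sets Omega" by (rule snu)
    fix L :: "'v set" and A :: "('v \<Rightarrow> 'a) set" assume L: "finite L" and A: "A \<in> sets Omega"
    let ?P = "PiM {..<q} (\<lambda>_. \<nu>)"
    have KL: "proper_prob_qkernel q L (\<gamma> L)" by (rule proper[OF L])
    have sGL: "sigma_sets UNIV (GL L) = sets (Omega :: ('v \<Rightarrow> 'a) measure)" by (rule sets_Omega_GL[symmetric])
    have Apow: "GL L \<subseteq> Pow (UNIV :: ('v \<Rightarrow> 'a) set)" by simp
    have "A \<in> sigma_sets UNIV (GL L)" using A sGL by simp
    from GL_Int_stable Apow this show "(\<integral>\<^sup>+\<eta>. emeasure (\<gamma> L \<eta>) A \<partial>?P) = emeasure \<nu> A"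
    proof (induction rule: sigma_sets_induct_disjoint)
      case (basic A)
      then obtain F1 B1 F2 B2 where Aeq: "A = cylF F1 B1 \<inter> cylF F2 B2" and F1: "finite F1" "F1 \<subseteq> L"
          and F2: "finite F2" "F2 \<subseteq> - L"
        unfolding GL_def by blast
      have Cc: "cylF F1 B1 \<in> sets (coord_sigma L)"
      proof (rule cylF_sets_gen[OF space_coord_sigma _ F1(1)])
        fix x a assume "x \<in> F1" then have "x \<in> L" using F1(2) by auto
        then show "{\<omega>. \<omega> x = a} \<in> sets (coord_sigma L)" unfolding sets_coord_sigma by (intro sigma_sets.Basic) blast
      qed
      have Dc: "cylF F2 B2 \<in> sets (coord_sigma (- L))"
      proof (rule cylF_sets_gen[OF space_coord_sigma _ F2(1)])
        fix x a assume "x \<in> F2" then have "x \<in> - L" using F2(2) by auto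
        then show "{\<omega>. \<omega> x = a} \<in> sets (coord_sigma (- L))" unfolding sets_coord_sigma by (intro sigma_sets.Basic) blast
      qed
      have Cs: "cylF F1 B1 \<in> sets Omega" using Cc coord_sub by blast
      have AR: "A \<in> cylR" using basic GL_sub by blast
      have As: "A \<in> sets Omega" using AR cylR_subset by blast
      define g' where "g' \<eta> = (1 / real q) * (\<Sum>j<q. measure (\<gamma> L (diag q (\<eta> j))) (cylF F1 B1) * indicator (cylF F2 B2) (\<eta> j))"
        for \<eta> :: "nat \<Rightarrow> 'v \<Rightarrow> 'a"
      have gg: "measure (\<gamma> L \<eta>) A = g' \<eta>" if "\<eta> \<in> space (Omega_q q)" for \<eta>
      proof -
        have "measure (\<gamma> L \<eta>) A = (1 / real q) * (\<Sum>j<q. measure (\<gamma> L (\<lambda>i\<in>{..<q}. \<eta> j)) A)"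
          by (rule represent[OF q assms(2) L As that])
        also have "\<dots> = g' \<eta>"
        proof -
          have "(\<lambda>i\<in>{..<q}. \<eta> j) = diag q (\<eta> j)" for j by (simp add: diag_def)
          then show ?thesis by (simp add: Aeq diag_proper[OF q KL Dc Cs] g'_def)
        qed
        finally show ?thesis .
      qed
      have g'c: "continuous_map (product_topology (\<lambda>_. Omega_top) {..<q}) euclideanreal g'"
        unfolding g'_def by (rule gprime_cont[OF ql[OF L Cc] F2(1)])
      have g'm: "g' \<in> borel_measurable (Omega_q q)"
      proof -
        have "(\<lambda>\<eta>. measure (\<gamma> L \<eta>) A) \<in> borel_measurable (Omega_q q) \<longleftrightarrow> g' \<in> borel_measurable (Omega_q q)"
          by (rule measurable_cong) (rule gg)
        then show ?thesis using kernel_meas[OF KL As] by blast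
      qed
      have g'b: "\<bar>g' \<eta>\<bar> \<le> 1" if "\<eta> \<in> space (Omega_q q)" for \<eta>
      proof -
        have "measure (\<gamma> L \<eta>) A \<le> 1" by (rule prob_space.prob_le_1[OF kernel_props(1)[OF KL that]])
        then show ?thesis using gg[OF that] measure_nonneg[of "\<gamma> L \<eta>" A] by simp
      qed
      have wc: "(\<lambda>n. \<integral>\<eta>. g' \<eta> \<partial>PiM {..<q} (\<lambda>_. \<mu> (d n))) \<longlonglongrightarrow> (\<integral>\<eta>. g' \<eta> \<partial>?P)"
        by (rule weak_conv[where \<mu>="\<lambda>n. \<mu> (d n)", OF g'c g'm g'b pmu smu pnu snu conv])
      have icong: "(\<integral>\<eta>. g' \<eta> \<partial>PiM {..<q} (\<lambda>_. m)) = (\<integral>\<eta>. measure (\<gamma> L \<eta>) A \<partial>PiM {..<q} (\<lambda>_. m))"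
        if "sets m = sets Omega" for m
        by (rule Bochner_Integration.integral_cong[OF refl])
          (use gg in \<open>simp add: space_PiM_Om[OF that] space_Omega_q\<close>)
      obtain n0 where n0: "\<And>n. n \<ge> n0 \<Longrightarrow> L \<subseteq> \<Lambda> n" using \<Lambda>big[OF L] by blast
      have eqn: "(\<integral>\<eta>. measure (\<gamma> L \<eta>) A \<partial>PiM {..<q} (\<lambda>_. \<mu> (d n))) = measure (\<mu> (d n)) A" if "n \<ge> n0" for n
      proof -
        have "n \<le> d n" by (rule seq_suble[OF d(1)])
        then have sub: "L \<subseteq> \<Lambda> (d n)" using n0 that by auto
        have "ennreal (\<integral>\<eta>. measure (\<gamma> L \<eta>) A \<partial>PiM {..<q} (\<lambda>_. \<mu> (d n))) = (\<integral>\<^sup>+\<eta>. emeasure (\<gamma> L \<eta>) A \<partial>PiM {..<q} (\<lambda>_. \<mu> (d n)))"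
          by (rule nn_int_eq(2)[OF KL As pmu smu, symmetric])
        also have "\<dots> = kernel_comp q (\<gamma> (\<Lambda> (d n))) (\<gamma> L) \<eta>0 A" unfolding kernel_comp_def \<mu>_def ..
        also have "\<dots> = emeasure (\<mu> (d n)) A" unfolding \<mu>_def by (rule cons[OF sub fin\<Lambda> \<eta>0 As])
        also have "\<dots> = ennreal (measure (\<mu> (d n)) A)"
          using pmu by (simp add: prob_space_def finite_measure.emeasure_eq_measure)
        finally have "ennreal (\<integral>\<eta>. measure (\<gamma> L \<eta>) A \<partial>PiM {..<q} (\<lambda>_. \<mu> (d n))) = ennreal (measure (\<mu> (d n)) A)" .
        then show ?thesis using ennreal_inj[OF nn_int_eq(3)[OF KL As pmu smu] measure_nonneg] by blast
      qed
      have l1: "(\<lambda>n. \<integral>\<eta>. g' \<eta> \<partial>PiM {..<q} (\<lambda>_. \<mu> (d (n + n0)))) \<longlonglongrightarrow> (\<integral>\<eta>. g' \<eta> \<partial>?P)"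
        using LIMSEQ_ignore_initial_segment[OF wc, of n0] .
      have l2: "(\<lambda>n. \<integral>\<eta>. g' \<eta> \<partial>PiM {..<q} (\<lambda>_. \<mu> (d (n + n0)))) \<longlonglongrightarrow> measure \<nu> A"
      proof -
        have "(\<lambda>n. \<integral>\<eta>. g' \<eta> \<partial>PiM {..<q} (\<lambda>_. \<mu> (d (n + n0)))) = (\<lambda>n. measure (\<mu> (d (n + n0))) A)"
          using icong[OF smu] eqn by simp
        then show ?thesis using LIMSEQ_ignore_initial_segment[OF conv[OF AR], of n0] by simp
      qed
      have "(\<integral>\<eta>. g' \<eta> \<partial>?P) = measure \<nu> A" using LIMSEQ_unique[OF l1 l2] .
      then have "(\<integral>\<eta>. measure (\<gamma> L \<eta>) A \<partial>?P) = measure \<nu> A" using icong[OF snu] by simp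
      then show ?case
        using nn_int_eq(2)[OF KL As pnu snu] pnu by (simp add: prob_space_def finite_measure.emeasure_eq_measure)
    next
      case empty
      show ?case by simp
    next
      case (compl A)
      have As: "A \<in> sets Omega" using compl(1) sGL by simp
      have Acs: "UNIV - A \<in> sets Omega" using sets.compl_sets[OF As] by (simp add: space_Omega)
      have pP: "prob_space ?P" by (rule prob_space_PiM) (rule pnu)
      then have fmP: "finite_measure ?P" by (simp add: prob_space_def)
      have pt: "measure (\<gamma> L \<eta>) (UNIV - A) = 1 - measure (\<gamma> L \<eta>) A" if "\<eta> \<in> space ?P" for \<eta>
      proof -
        have \<eta>': "\<eta> \<in> space (Omega_q q)" using that by (simp add: space_PiM_Om[OF snu] space_Omega_q)
        have pk: "prob_space (\<gamma> L \<eta>)" and sk: "sets (\<gamma> L \<eta>) = sets Omega" using kernel_props[OF KL \<eta>'] by auto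
        have "space (\<gamma> L \<eta>) = UNIV" using sets_eq_imp_space_eq[OF sk] space_Omega by simp
        then show ?thesis using prob_space.prob_compl[OF pk, of A] As sk by simp
      qed
      have "(\<integral>\<eta>. measure (\<gamma> L \<eta>) (UNIV - A) \<partial>?P) = (\<integral>\<eta>. 1 - measure (\<gamma> L \<eta>) A \<partial>?P)"
        by (rule Bochner_Integration.integral_cong[OF refl pt])
      also have "\<dots> = 1 - (\<integral>\<eta>. measure (\<gamma> L \<eta>) A \<partial>?P)"
        by (simp add: Bochner_Integration.integral_diff[OF finite_measure.integrable_const[OF fmP] nn_int_eq(1)[OF KL As pnu snu]]
            prob_space.prob_space[OF pP])
      finally have I: "(\<integral>\<eta>. measure (\<gamma> L \<eta>) (UNIV - A) \<partial>?P) = 1 - (\<integral>\<eta>. measure (\<gamma> L \<eta>) A \<partial>?P)" .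
      have "ennreal (\<integral>\<eta>. measure (\<gamma> L \<eta>) A \<partial>?P) = ennreal (measure \<nu> A)"
        using compl(2) nn_int_eq(2)[OF KL As pnu snu] pnu by (simp add: prob_space_def finite_measure.emeasure_eq_measure)
      then have IA: "(\<integral>\<eta>. measure (\<gamma> L \<eta>) A \<partial>?P) = measure \<nu> A"
        using ennreal_inj[OF nn_int_eq(3)[OF KL As pnu snu] measure_nonneg] by blast
      have "measure \<nu> (UNIV - A) = 1 - measure \<nu> A" using prob_space.prob_compl[OF pnu, of A] As snu spnu by simp
      then show ?case using nn_int_eq(2)[OF KL Acs pnu snu] I IA pnu
        by (simp add: prob_space_def finite_measure.emeasure_eq_measure)
    next
      case (union A)
      have As: "range A \<subseteq> sets Omega" using union(2) sGL by simp
      have "(\<integral>\<^sup>+\<eta>. emeasure (\<gamma> L \<eta>) (\<Union>i. A i) \<partial>?P) = (\<integral>\<^sup>+\<eta>. (\<Sum>i. emeasure (\<gamma> L \<eta>) (A i)) \<partial>?P)"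
      proof (rule nn_integral_cong)
        fix \<eta> assume "\<eta> \<in> space ?P"
        then have \<eta>': "\<eta> \<in> space (Omega_q q)" by (simp add: space_PiM_Om[OF snu] space_Omega_q)
        have sk: "sets (\<gamma> L \<eta>) = sets Omega" using kernel_props[OF KL \<eta>'] by auto
        show "emeasure (\<gamma> L \<eta>) (\<Union>i. A i) = (\<Sum>i. emeasure (\<gamma> L \<eta>) (A i))"
          using suminf_emeasure[of A "\<gamma> L \<eta>"] As sk union(1) by simp
      qed
      also have "\<dots> = (\<Sum>i. \<integral>\<^sup>+\<eta>. emeasure (\<gamma> L \<eta>) (A i) \<partial>?P)"
        by (rule nn_integral_suminf) (use As in \<open>auto intro: nn_int_eq(4)[OF KL _ pnu snu]\<close>)
      also have "\<dots> = (\<Sum>i. emeasure \<nu> (A i))" using union(3) by simp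
      also have "\<dots> = emeasure \<nu> (\<Union>i. A i)" using suminf_emeasure[of A \<nu>] As snu union(1) by simp
      finally show ?case .
    qed
  qed
  then show ?thesis by blast
qed

end
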